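(* Let $p\in\mathbb{N}^*$ and $\gamma\geq1$. Let $V$ be a subset of a normed vector space and let $f$ be a Banach-space-valued Lip-$\gamma$ map defined on $V$. Assume there exists a homeomorphism $F:\mathbb{R}^p\to V$ which is Lip-$\gamma$. Then $f$ is Lip-$\gamma$ on $V$ in the manifold sense for the $F$-induced Lipschitz structure, i.e. there exists a constant $C$ such that for every $x\in I$ the map $f\circ(\phi_x\circ F^{-1}|_{F(B_p(x,1))})^{-1}:B_p(0,1)\to W$ is Lip-$\gamma$ with norm at most $C$.
   Context: Lip-$\gamma$ (Stein sense): for $m$ the integer with $0<\gamma-m\le1$, a collection $(g^0,\ldots,g^m)$ on a set $U\subseteq E$, $g^k:U\to\mathcal{L}_s(E^{\otimes k},W)$, is Lip-$\gamma$ with norm $\le M$ if $\|g^k(x)(v)\|\le M\|v\|$ and $\|R_k(x,y)(v)\|\le M\|x-y\|^{\gamma-k}\|v\|$ for all $k,x,y,v=v_1\otimes\cdots\otimes v_k$, where $g^k(x)(v)=\sum_{j=k}^m g^j(y)\big(\frac{v\otimes(x-y)^{\otimes(j-k)}}{(j-k)!}\big)+R_k(x,y)(v)$; on open sets the $g^k$ are the derivatives of $g^0$. $W$ denotes the Banach space where $f$ takes values. $F$-induced structure on $V$: let $I=\{\sum_{i=1}^p\frac{k_i}{\sqrt p}e_i:k_i\in\mathbb{Z}\}$ ($e_i$ canonical basis), $\varphi:\mathbb{R}^p\to\mathbb{R}^p$ a Lip-$\gamma$ map equal to the identity on $B_p(0,1)$ and supported in $B_p(0,2)$, $\phi_x(y)=\varphi(y-x)$;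 the atlas on $V$ is $(F(B_p(x,1)),\phi_x\circ F^{-1})_{x\in I}$. *)

theory Defs
  imports "HOL-Analysis.Analysis"
begin

text \<open>A k-linear symmetric map on E (representing an element of L_s(E^{\<otimes>k}, W) via its
  values on elementary tensors v_0 \<otimes> ... \<otimes> v_{k-1}); arguments are given as a
  sequence v :: nat \<Rightarrow> 'e of which only v 0, ..., v (k-1) matter.\<close>
definition multilin_sym :: "nat \<Rightarrow> ((nat \<Rightarrow> 'e::real_vector) \<Rightarrow> 'w::real_vector) \<Rightarrow> bool" where
  "multilin_sym k A \<longleftrightarrow>
     (\<forall>v w. (\<forall>i<k. v i = w i) \<longrightarrow> A v = A w) \<and>
     (\<forall>i<k. \<forall>v. linear (\<lambda>a. A (v(i := a)))) \<and>
     (\<forall>\<pi> v. \<pi> permutes {..<k} \<longrightarrow> A (v \<circ> \<pi>) = A v)"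

text \<open>The integer m with 0 < gamma - m \<le> 1.\<close>
definition lip_deg :: "real \<Rightarrow> nat" where
  "lip_deg \<gamma> = nat (\<lceil>\<gamma>\<rceil> - 1)"

definition lip_rem :: "nat \<Rightarrow> (nat \<Rightarrow> 'e::real_normed_vector \<Rightarrow> (nat \<Rightarrow> 'e) \<Rightarrow> 'w::real_normed_vector)
    \<Rightarrow> nat \<Rightarrow> 'e \<Rightarrow> 'e \<Rightarrow> (nat \<Rightarrow> 'e) \<Rightarrow> 'w" where
  "lip_rem m g k x y v =
     g k x v - (\<Sum>j=k..m. (1 / fact (j - k)) *\<^sub>R g j y (\<lambda>i. if i < k then v i else x - y))"

definition lip_coll :: "real \<Rightarrow> real \<Rightarrow> 'e::real_normed_vector set
    \<Rightarrow> (nat \<Rightarrow> 'e \<Rightarrow> (nat \<Rightarrow> 'e) \<Rightarrow> 'w::real_normed_vector) \<Rightarrow> bool" where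
  "lip_coll \<gamma> M U g \<longleftrightarrow>
     (\<forall>k\<le>lip_deg \<gamma>.
        (\<forall>x\<in>U. multilin_sym k (g k x)) \<and>
        (\<forall>x\<in>U. \<forall>v. norm (g k x v) \<le> M * (\<Prod>i<k. norm (v i))) \<and>
        (\<forall>x\<in>U. \<forall>y\<in>U. \<forall>v. norm (lip_rem (lip_deg \<gamma>) g k x y v)
              \<le> M * norm (x - y) powr (\<gamma> - real k) * (\<Prod>i<k. norm (v i))))"

definition lip_gamma_on :: "real \<Rightarrow> real \<Rightarrow> 'e::real_normed_vector set
    \<Rightarrow> ('e \<Rightarrow> 'w::real_normed_vector) \<Rightarrow> bool" where
  "lip_gamma_on \<gamma> M U f \<longleftrightarrow>
     (\<exists>g. lip_coll \<gamma> M U g \<and> (\<forall>x\<in>U. \<forall>v. g 0 x v = f x))"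

definition lattice_I :: "(real^'n) set" where
  "lattice_I = {x. \<forall>i. \<exists>k::int. x $ i = of_int k / sqrt (real CARD('n))}"

end

theory Submission
  imports Defs
begin

definition mlin :: "nat \<Rightarrow> ((nat \<Rightarrow> 'e::real_vector) \<Rightarrow> 'w::real_vector) \<Rightarrow> bool" where
  "mlin k A \<longleftrightarrow> (\<forall>v w. (\<forall>i<k. v i = w i) \<longrightarrow> A v = A w) \<and> (\<forall>i<k. \<forall>v. linear (\<lambda>a. A (v(i := a))))"

lemma multilin_sym_iff: "multilin_sym k A \<longleftrightarrow> mlin k A \<and> (\<forall>\<pi> v. \<pi> permutes {..<k} \<longrightarrow> A (v \<circ> \<pi>) = A v)"
  unfolding multilin_sym_def mlin_def by blast

lemma msym_mlin: "multilin_sym k A \<Longrightarrow> mlin k A"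
  by (simp add: multilin_sym_iff)

lemma msym_perm: "multilin_sym k A \<Longrightarrow> \<pi> permutes {..<k} \<Longrightarrow> A (v \<circ> \<pi>) = A v"
  by (simp add: multilin_sym_iff)

lemma mlin_cong: "mlin k A \<Longrightarrow> (\<And>i. i<k \<Longrightarrow> v i = w i) \<Longrightarrow> A v = A w"
  unfolding mlin_def by blast

lemma mlin_lin: "mlin k A \<Longrightarrow> i<k \<Longrightarrow> linear (\<lambda>a. A (v(i:=a)))"
  unfolding mlin_def by blast

lemma mlin_add: "mlin k A \<Longrightarrow> i<k \<Longrightarrow> A (v(i:=a+b)) = A (v(i:=a)) + A (v(i:=b))"
  using linear_add[OF mlin_lin[of k A i v]] by simp

lemma mlin_diff: "mlin k A \<Longrightarrow> i<k \<Longrightarrow> A (v(i:=a-b)) = A (v(i:=a)) - A (v(i:=b))"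
  using linear_diff[OF mlin_lin[of k A i v]] by simp

lemma mlin_scale: "mlin k A \<Longrightarrow> i<k \<Longrightarrow> A (v(i:=c *\<^sub>R a)) = c *\<^sub>R A (v(i:=a))"
  using linear_cmul[OF mlin_lin[of k A i v]] by simp

lemma mlin_sum: "mlin k A \<Longrightarrow> i<k \<Longrightarrow> A (v(i:=(\<Sum>s\<in>S. g s))) = (\<Sum>s\<in>S. A (v(i:=g s)))"
  using linear_sum[OF mlin_lin[of k A i v]] by simp

lemma mlin_zero: "mlin k A \<Longrightarrow> i<k \<Longrightarrow> v i = 0 \<Longrightarrow> A v = 0"
proof -
  assume a: "mlin k A" "i<k" "v i = 0"
  have "A v = A (v(i:=0))" using a by (intro mlin_cong[OF a(1)]) auto
  also have "\<dots> = 0" using linear_0[OF mlin_lin[OF a(1) a(2), of v]] by simp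
  finally show ?thesis .
qed

lemma mlin_scale_prefix:
  assumes "mlin k A" "n \<le> k"
  shows "A (\<lambda>l. if l<n then c l *\<^sub>R u l else u l) = (\<Prod>l<n. c l) *\<^sub>R A u"
  using assms(2)
proof (induction n)
  case 0
  then show ?case by simp
next
  case (Suc n)
  have e: "(\<lambda>l. if l<Suc n then c l *\<^sub>R u l else u l) =
        (\<lambda>l. if l<n then c l *\<^sub>R u l else u l)(n := c n *\<^sub>R u n)" by (auto simp: fun_eq_iff)
  have e2: "(\<lambda>l. if l<n then c l *\<^sub>R u l else u l)(n := u n) = (\<lambda>l. if l<n then c l *\<^sub>R u l else u l)"
    by (auto simp: fun_eq_iff)
  show ?case using Suc by (simp only: e mlin_scale[OF assms(1)] e2) (simp add: mult.commute)
qed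

lemma mlin_scale_all:
  assumes "mlin k A"
  shows "A (\<lambda>l. c l *\<^sub>R u l) = (\<Prod>l<k. c l) *\<^sub>R A u"
proof -
  have "A (\<lambda>l. c l *\<^sub>R u l) = A (\<lambda>l. if l<k then c l *\<^sub>R u l else u l)"
    by (rule mlin_cong[OF assms]) auto
  then show ?thesis using mlin_scale_prefix[OF assms order_refl] by simp
qed

lemma mlin_scale_const:
  assumes "mlin k A"
  shows "A (\<lambda>l. c *\<^sub>R u l) = c^k *\<^sub>R A u"
  using mlin_scale_all[OF assms, of "\<lambda>_. c" u] by simp

lemma msym_binom:
  assumes "multilin_sym k A" "n \<le> k"
  shows "A (\<lambda>l. if l<n then t + d else u l) =
    (\<Sum>K\<le>n. real (n choose K) *\<^sub>R A (\<lambda>l. if l<K then t else if l<n then d else u l))"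
  using assms(2)
proof (induction n arbitrary: u)
  case 0
  then show ?case by simp
next
  case (Suc n)
  have ml: "mlin k A" using msym_mlin[OF assms(1)] .
  have nk: "n < k" using Suc by simp
  define S where "S u' = (\<lambda>l. if l<n then t + d else u' l)" for u'
  define G where "G K = (\<lambda>l. if l<K then t else if l<Suc n then d else u l)" for K
  define g where "g K = A (G K)" for K
  have "A (\<lambda>l. if l<Suc n then t + d else u l) = A ((S u)(n := t + d))"
    by (rule arg_cong[where f=A]) (auto simp: S_def fun_eq_iff)
  also have "\<dots> = A ((S u)(n := t)) + A ((S u)(n := d))" using mlin_add[OF ml nk] by simp
  also have "A ((S u)(n := t)) = A (S (u(n:=t)))" by (rule arg_cong[where f=A]) (auto simp: S_def fun_eq_iff)
  also have "A ((S u)(n := d)) = A (S (u(n:=d)))" by (rule arg_cong[where f=A]) (auto simp: S_def fun_eq_iff)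
  also have "A (S (u(n:=t))) = (\<Sum>K\<le>n. real (n choose K) *\<^sub>R g (Suc K))"
  proof -
    have "A (S (u(n:=t))) = (\<Sum>K\<le>n. real (n choose K) *\<^sub>R A (\<lambda>l. if l<K then t else if l<n then d else (u(n:=t)) l))"
      unfolding S_def using Suc by simp
    also have "\<dots> = (\<Sum>K\<le>n. real (n choose K) *\<^sub>R g (Suc K))"
    proof (rule sum.cong[OF refl])
      fix K assume K: "K \<in> {..n}"
      show "real (n choose K) *\<^sub>R A (\<lambda>l. if l<K then t else if l<n then d else (u(n:=t)) l) = real (n choose K) *\<^sub>R g (Suc K)"
      proof (cases "K = n")
        case True
        then show ?thesis unfolding g_def G_def by (auto intro!: arg_cong[where f=A] simp: fun_eq_iff)
      next
        case False
        then have Kn: "K < n" using K by simp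
        let ?w = "(\<lambda>l. if l<K then t else if l<n then d else (u(n:=t)) l)"
        have "A ?w = A (?w \<circ> Transposition.transpose K n)"
          using msym_perm[OF assms(1), of "Transposition.transpose K n" ?w] Kn nk permutes_swap_id[of K "{..<k}" n] by simp
        also have "?w \<circ> Transposition.transpose K n = G (Suc K)"
          using Kn by (auto simp: G_def fun_eq_iff Transposition.transpose_def)
        finally show ?thesis by (simp add: g_def)
      qed
    qed
    finally show ?thesis .
  qed
  also have "A (S (u(n:=d))) = (\<Sum>K\<le>n. real (n choose K) *\<^sub>R A (\<lambda>l. if l<K then t else if l<n then d else (u(n:=d)) l))"
    unfolding S_def using Suc by simp
  also have "\<dots> = (\<Sum>K\<le>n. real (n choose K) *\<^sub>R g K)"
    by (intro sum.cong refl) (simp add: g_def G_def, intro arg_cong[where f=A] ext, auto)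
  also have "(\<Sum>K\<le>n. real (n choose K) *\<^sub>R g (Suc K)) + (\<Sum>K\<le>n. real (n choose K) *\<^sub>R g K) =
      (\<Sum>K\<le>Suc n. real (Suc n choose K) *\<^sub>R g K)"
  proof -
    have a: "(\<Sum>K\<le>Suc n. real (Suc n choose K) *\<^sub>R g K) = g 0 + (\<Sum>K\<le>n. real (Suc n choose Suc K) *\<^sub>R g (Suc K))"
      by (simp only: sum.atMost_Suc_shift) (simp del: sum.atMost_Suc binomial_Suc_Suc)
    have b: "(\<Sum>K\<le>n. real (n choose K) *\<^sub>R g K) = g 0 + (\<Sum>K\<le>n. real (n choose Suc K) *\<^sub>R g (Suc K))"
    proof -
      have "(\<Sum>K\<le>Suc n. real (n choose K) *\<^sub>R g K) = g 0 + (\<Sum>K\<le>n. real (n choose Suc K) *\<^sub>R g (Suc K))"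
        by (simp only: sum.atMost_Suc_shift) (simp del: sum.atMost_Suc)
      moreover have "(\<Sum>K\<le>Suc n. real (n choose K) *\<^sub>R g K) = (\<Sum>K\<le>n. real (n choose K) *\<^sub>R g K)"
        by simp
      ultimately show ?thesis by simp
    qed
    show ?thesis unfolding a b by (simp add: sum.distrib scaleR_add_left del: sum.atMost_Suc)
  qed
  finally show ?case unfolding g_def G_def by simp
qed

lemma sum_swap_prod: "(\<Sum>i\<in>P. \<Sum>s\<in>S. G i s) = (\<Sum>p\<in>S \<times> P. (G (snd p) (fst p) :: 'a::comm_monoid_add))"
  by (subst sum.swap) (simp add: sum.cartesian_product split_def)

lemma mlin_expand:
  assumes "mlin k A" "n \<le> k" "finite S"
  shows "A (\<lambda>l. if l<n then (\<Sum>s\<in>S. q l s) else u l) =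
    (\<Sum>\<iota>\<in>{..<n} \<rightarrow>\<^sub>E S. A (\<lambda>l. if l<n then q l (\<iota> l) else u l))"
  using assms(2)
proof (induction n arbitrary: u)
  case 0
  then show ?case by simp
next
  case (Suc n)
  have nk: "n < k" using Suc by simp
  have "A (\<lambda>l. if l<Suc n then (\<Sum>s\<in>S. q l s) else u l) =
      A (\<lambda>l. if l<n then (\<Sum>s\<in>S. q l s) else (u(n := (\<Sum>s\<in>S. q n s))) l)"
    by (rule arg_cong[where f=A]) (auto simp: fun_eq_iff)
  also have "\<dots> = (\<Sum>\<iota>\<in>{..<n} \<rightarrow>\<^sub>E S. A (\<lambda>l. if l<n then q l (\<iota> l) else (u(n := (\<Sum>s\<in>S. q n s))) l))"
    using Suc by simp
  also have "\<dots> = (\<Sum>\<iota>\<in>{..<n} \<rightarrow>\<^sub>E S. \<Sum>s\<in>S. A (\<lambda>l. if l<Suc n then q l ((\<iota>(n:=s)) l) else u l))"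
  proof (rule sum.cong[OF refl])
    fix \<iota> assume "\<iota> \<in> {..<n} \<rightarrow>\<^sub>E S"
    have "A (\<lambda>l. if l<n then q l (\<iota> l) else (u(n := (\<Sum>s\<in>S. q n s))) l) =
        A ((\<lambda>l. if l<n then q l (\<iota> l) else u l)(n := (\<Sum>s\<in>S. q n s)))"
      by (rule arg_cong[where f=A]) (auto simp: fun_eq_iff)
    also have "\<dots> = (\<Sum>s\<in>S. A ((\<lambda>l. if l<n then q l (\<iota> l) else u l)(n := q n s)))"
      by (rule mlin_sum[OF assms(1) nk])
    also have "\<dots> = (\<Sum>s\<in>S. A (\<lambda>l. if l<Suc n then q l ((\<iota>(n:=s)) l) else u l))"
      by (intro sum.cong refl arg_cong[where f=A]) (auto simp: fun_eq_iff)
    finally show "A (\<lambda>l. if l<n then q l (\<iota> l) else (u(n := (\<Sum>s\<in>S. q n s))) l) =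
        (\<Sum>s\<in>S. A (\<lambda>l. if l<Suc n then q l ((\<iota>(n:=s)) l) else u l))" .
  qed
  also have "\<dots> = (\<Sum>p\<in>S \<times> ({..<n} \<rightarrow>\<^sub>E S). A (\<lambda>l. if l<Suc n then q l (((snd p)(n:=fst p)) l) else u l))"
    by (rule sum_swap_prod)
  also have "\<dots> = (\<Sum>\<iota>\<in>{..<Suc n} \<rightarrow>\<^sub>E S. A (\<lambda>l. if l<Suc n then q l (\<iota> l) else u l))"
  proof -
    have eq: "{..<Suc n} \<rightarrow>\<^sub>E S = (\<lambda>(y, g). g(n := y)) ` (S \<times> ({..<n} \<rightarrow>\<^sub>E S))"
      using PiE_insert_eq[of n "{..<n}" "\<lambda>_. S"] by (simp add: lessThan_Suc)
    have inj: "inj_on (\<lambda>(y, g). g(n := y)) (S \<times> ({..<n} \<rightarrow>\<^sub>E S))"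
      using inj_combinator[of n "{..<n}" "\<lambda>_. S"] by simp
    show ?thesis unfolding eq by (subst sum.reindex[OF inj]) (simp only: o_def case_prod_beta)
  qed
  finally show ?case .
qed

lemma mlin_diag_lip:
  assumes "mlin k A" "\<And>v. norm (A v) \<le> M * (\<Prod>i<k. norm (v i))" "M \<ge> 0"
    "norm u \<le> R" "norm u' \<le> R"
  shows "norm (A (\<lambda>_. u) - A (\<lambda>_. u')) \<le> real k * (M * R^(k-1) * norm (u - u'))"
proof -
  define S where "S i = (\<lambda>l::nat. if l < i then u else u')" for i
  have R0: "R \<ge> 0" using assms(4) norm_ge_zero order_trans by blast
  have "A (\<lambda>_. u) - A (\<lambda>_. u') = A (S k) - A (S 0)"
    using mlin_cong[OF assms(1), of "S k" "\<lambda>_. u"] by (simp add: S_def)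
  also have "\<dots> = (\<Sum>i<k. A (S (Suc i)) - A (S i))" by (rule sum_lessThan_telescope[symmetric])
  finally have eq: "A (\<lambda>_. u) - A (\<lambda>_. u') = (\<Sum>i<k. A (S (Suc i)) - A (S i))" .
  have b: "norm (A (S (Suc i)) - A (S i)) \<le> M * R^(k-1) * norm (u - u')" if i: "i < k" for i
  proof -
    have "A (S (Suc i)) - A (S i) = A ((S i)(i := u)) - A ((S i)(i := u'))"
      by (intro arg_cong2[where f="(-)"] arg_cong[where f=A]) (auto simp: S_def fun_eq_iff)
    also have "\<dots> = A ((S i)(i := u - u'))" using mlin_diff[OF assms(1) i] by simp
    finally have e: "A (S (Suc i)) - A (S i) = A ((S i)(i := u - u'))" .
    have "(\<Prod>l<k. norm (((S i)(i := u - u')) l)) = norm (u - u') * (\<Prod>l\<in>{..<k}-{i}. norm (S i l))"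
      using i by (subst prod.remove[of _ i]) (auto intro!: prod.cong)
    also have "\<dots> \<le> norm (u - u') * R^(k-1)"
    proof (rule mult_left_mono)
      have "(\<Prod>l\<in>{..<k}-{i}. norm (S i l)) \<le> (\<Prod>l\<in>{..<k}-{i}. R)"
        by (rule prod_mono) (use assms(4,5) in \<open>auto simp: S_def\<close>)
      also have "\<dots> = R^(k-1)" using i by simp
      finally show "(\<Prod>l\<in>{..<k}-{i}. norm (S i l)) \<le> R^(k-1)" .
    qed simp
    finally have "(\<Prod>l<k. norm (((S i)(i := u - u')) l)) \<le> norm (u - u') * R^(k-1)" .
    then have "M * (\<Prod>l<k. norm (((S i)(i := u - u')) l)) \<le> M * (norm (u - u') * R^(k-1))"
      using assms(3) by (rule mult_left_mono)
    then show ?thesis using e assms(2)[of "(S i)(i := u - u')"] by (simp add: mult_ac)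
  qed
  have "norm (\<Sum>i<k. A (S (Suc i)) - A (S i)) \<le> (\<Sum>i<k. M * R^(k-1) * norm (u - u'))"
    by (rule sum_norm_le) (use b in auto)
  then show ?thesis using eq by simp
qed


lemma lagrange_exists:
  fixes x :: "nat \<Rightarrow> real"
  assumes inj: "inj_on x {..N}"
  shows "\<exists>lam. \<forall>k\<le>N. \<forall>i\<le>N. (\<Sum>j\<le>N. lam k j * x j ^ i) = (if i = k then 1 else 0)"
proof -
  define L where "L j = smult (1 / (\<Prod>i\<in>{..N}-{j}. (x j - x i))) (\<Prod>i\<in>{..N}-{j}. [:- x i, 1:])" for j
  have degL: "degree (L j) \<le> N" if "j \<le> N" for j
  proof -
    have "degree (\<Prod>i\<in>{..N}-{j}. [:- x i, 1:]) \<le> (\<Sum>i\<in>{..N}-{j}. degree [:- x i, 1:])"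
      using degree_prod_sum_le[of "{..N}-{j}" "\<lambda>i. [:- x i, 1:]"] by (simp add: o_def)
    also have "\<dots> \<le> N" using that by simp
    finally show ?thesis unfolding L_def using degree_smult_le order_trans by blast
  qed
  have polyL: "poly (L j) (x l) = (if l = j then 1 else 0)" if "j \<le> N" "l \<le> N" for j l
  proof (cases "l = j")
    case True
    have "(\<Prod>i\<in>{..N}-{j}. (x j - x i)) \<noteq> 0"
      using inj that by (auto simp: inj_on_def)
    then show ?thesis using True by (simp add: L_def poly_prod)
  next
    case False
    then have "(\<Prod>i\<in>{..N}-{j}. poly [:- x i, 1:] (x l)) = 0"
      using that by (intro prod_zero) auto
    then show ?thesis using False by (simp add: L_def poly_prod)
  qed
  have key: "(\<Sum>j\<le>N. smult (x j ^ i) (L j)) = monom 1 i" if i: "i \<le> N" for i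
  proof (rule ccontr)
    define D where "D = (\<Sum>j\<le>N. smult (x j ^ i) (L j)) - monom 1 i"
    assume "(\<Sum>j\<le>N. smult (x j ^ i) (L j)) \<noteq> monom 1 i"
    then have D0: "D \<noteq> 0" by (simp add: D_def)
    have "degree D \<le> N"
    proof -
      have "degree (\<Sum>j\<le>N. smult (x j ^ i) (L j)) \<le> N"
        by (rule degree_sum_le) (auto intro!: order_trans[OF degree_smult_le] degL)
      moreover have "degree (monom (1::real) i) \<le> N" using i by (simp add: degree_monom_le order_trans[OF degree_monom_le])
      ultimately show ?thesis unfolding D_def using degree_diff_le by blast
    qed
    have roots: "x ` {..N} \<subseteq> {y. poly D y = 0}"
    proof
      fix y assume "y \<in> x ` {..N}"
      then obtain l where l: "l \<le> N" "y = x l" by auto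
      have "poly (\<Sum>j\<le>N. smult (x j ^ i) (L j)) (x l) = (\<Sum>j\<le>N. x j ^ i * (if l = j then 1 else 0))"
        by (simp add: poly_sum polyL l)
      also have "\<dots> = x l ^ i" using l by (simp add: if_distrib sum.delta cong: if_cong)
      finally show "y \<in> {y. poly D y = 0}" using l by (simp add: D_def poly_monom)
    qed
    have "card (x ` {..N}) = Suc N" using inj by (simp add: card_image)
    moreover have "card (x ` {..N}) \<le> card {y. poly D y = 0}"
      by (rule card_mono[OF poly_roots_finite[OF D0] roots])
    ultimately show False using card_poly_roots_bound[OF D0] \<open>degree D \<le> N\<close> by simp
  qed
  show ?thesis
  proof (intro exI allI impI)
    fix k i assume k: "k \<le> N" and i: "i \<le> N"
    have "(\<Sum>j\<le>N. coeff (L j) k * x j ^ i) = coeff (\<Sum>j\<le>N. smult (x j ^ i) (L j)) k"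
      by (simp add: coeff_sum mult.commute)
    also have "\<dots> = (if i = k then 1 else 0)" using key[OF i] by (simp add: coeff_monom)
    finally show "(\<Sum>j\<le>N. coeff (L j) k * x j ^ i) = (if i = k then 1 else 0)" .
  qed
qed

lemma markov:
  "\<exists>K\<ge>0. \<forall>(c::nat \<Rightarrow> 'w::real_normed_vector) B. (\<forall>s\<in>{0..1}. norm (\<Sum>k\<le>N. s^k *\<^sub>R c k) \<le> B) \<longrightarrow> (\<forall>k\<le>N. norm (c k) \<le> K * B)"
proof -
  define x where "x j = real j / real (Suc N)" for j
  have inj: "inj_on x {..N}" by (auto simp: inj_on_def x_def)
  obtain lam where lam: "\<And>k i. k \<le> N \<Longrightarrow> i \<le> N \<Longrightarrow> (\<Sum>j\<le>N. lam k j * x j ^ i) = (if i = k then 1 else 0)"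
    using lagrange_exists[OF inj] by blast
  define K where "K = (\<Sum>k\<le>N. \<Sum>j\<le>N. \<bar>lam k j\<bar>)"
  have K0: "K \<ge> 0" unfolding K_def by (intro sum_nonneg) auto
  show ?thesis
  proof (rule exI[of _ K], intro conjI K0 allI impI)
    fix c :: "nat \<Rightarrow> 'w" and B k
    assume H: "\<forall>s\<in>{0..1}. norm (\<Sum>k\<le>N. s^k *\<^sub>R c k) \<le> B" and k: "k \<le> N"
    have xin: "x j \<in> {0..1}" if "j \<le> N" for j using that by (simp add: x_def)
    have B0: "B \<ge> 0"
    proof -
      have "norm (\<Sum>k\<le>N. (0::real)^k *\<^sub>R c k) \<le> B" using H by simp
      then show ?thesis using norm_ge_zero order_trans by blast
    qed
    have "(\<Sum>j\<le>N. lam k j *\<^sub>R (\<Sum>i\<le>N. x j ^ i *\<^sub>R c i)) = (\<Sum>i\<le>N. (\<Sum>j\<le>N. lam k j * x j ^ i) *\<^sub>R c i)"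
      by (simp add: scaleR_sum_right scaleR_sum_left scaleR_scaleR, subst sum.swap, simp)
    also have "\<dots> = (\<Sum>i\<le>N. (if i = k then c i else 0))"
      by (rule sum.cong[OF refl], subst lam[OF k], auto)
    also have "\<dots> = c k" using k by simp
    finally have ck: "c k = (\<Sum>j\<le>N. lam k j *\<^sub>R (\<Sum>i\<le>N. x j ^ i *\<^sub>R c i))" by simp
    have "norm (c k) \<le> (\<Sum>j\<le>N. \<bar>lam k j\<bar> * B)"
      unfolding ck
      by (rule order_trans[OF norm_sum sum_mono]) (auto intro!: mult_left_mono H[rule_format] xin)
    also have "\<dots> = (\<Sum>j\<le>N. \<bar>lam k j\<bar>) * B" by (simp add: sum_distrib_right)
    also have "\<dots> \<le> K * B"
    proof (rule mult_right_mono[OF _ B0])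
      show "(\<Sum>j\<le>N. \<bar>lam k j\<bar>) \<le> K"
        unfolding K_def using k by (intro member_le_sum) (auto intro: sum_nonneg)
    qed
    finally show "norm (c k) \<le> K * B" .
  qed
qed


lemma mlin_sum_fun:
  fixes A :: "'s \<Rightarrow> (nat \<Rightarrow> 'e::real_vector) \<Rightarrow> 'w::real_vector"
  assumes "\<And>s. s \<in> S \<Longrightarrow> mlin k (A s)"
  shows "mlin k (\<lambda>v. \<Sum>s\<in>S. A s v)"
  unfolding mlin_def
proof (intro conjI allI impI)
  fix v w :: "nat \<Rightarrow> 'e" assume "\<forall>i<k. v i = w i"
  then show "(\<Sum>s\<in>S. A s v) = (\<Sum>s\<in>S. A s w)"
    using assms by (intro sum.cong refl) (auto intro: mlin_cong)
next
  fix i v assume "i < k"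
  then show "linear (\<lambda>a. \<Sum>s\<in>S. A s (v(i := a)))"
    using assms by (intro linear_compose_sum) (auto intro: mlin_lin)
qed

lemma mlin_scaleR_fun:
  fixes A :: "(nat \<Rightarrow> 'e::real_vector) \<Rightarrow> 'w::real_vector"
  assumes "mlin k A"
  shows "mlin k (\<lambda>v. c *\<^sub>R A v)"
  unfolding mlin_def
proof (intro conjI allI impI)
  fix v w :: "nat \<Rightarrow> 'e" assume "\<forall>i<k. v i = w i"
  then show "c *\<^sub>R A v = c *\<^sub>R A w" using mlin_cong[OF assms] by metis
next
  fix i v assume "i < k"
  then have "linear (\<lambda>a. A (v(i := a)))" by (rule mlin_lin[OF assms])
  then show "linear (\<lambda>a. c *\<^sub>R A (v(i := a)))"
    using linear_compose[OF _ linear_scaleR, of "\<lambda>a. A (v(i := a))" c] by (simp add: o_def)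
qed

lemma mlin_diff_fun:
  fixes A B :: "(nat \<Rightarrow> 'e::real_vector) \<Rightarrow> 'w::real_vector"
  assumes "mlin k A" "mlin k B"
  shows "mlin k (\<lambda>v. A v - B v)"
  unfolding mlin_def
proof (intro conjI allI impI)
  fix v w :: "nat \<Rightarrow> 'e" assume "\<forall>i<k. v i = w i"
  then show "A v - B v = A w - B w" using mlin_cong[OF assms(1)] mlin_cong[OF assms(2)] by metis
next
  fix i v assume "i < k"
  then show "linear (\<lambda>a. A (v(i := a)) - B (v(i := a)))"
    by (intro linear_compose_sub mlin_lin[OF assms(1)] mlin_lin[OF assms(2)])
qed

lemma mlin_perm_fun:
  fixes A :: "(nat \<Rightarrow> 'e::real_vector) \<Rightarrow> 'w::real_vector"
  assumes "mlin k A" "\<sigma> permutes {..<k}"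
  shows "mlin k (\<lambda>v. A (v \<circ> \<sigma>))"
  unfolding mlin_def
proof (intro conjI allI impI)
  fix v w :: "nat \<Rightarrow> 'e" assume "\<forall>i<k. v i = w i"
  then show "A (v \<circ> \<sigma>) = A (w \<circ> \<sigma>)"
    using permutes_in_image[OF assms(2)] by (intro mlin_cong[OF assms(1)]) auto
next
  fix i v assume i: "i < k"
  have ii: "inv \<sigma> i < k" using i permutes_in_image[OF permutes_inv[OF assms(2)]] by auto
  have "(\<lambda>a. A (v(i := a) \<circ> \<sigma>)) = (\<lambda>a. A ((v \<circ> \<sigma>)(inv \<sigma> i := a)))"
  proof (rule ext, rule arg_cong[where f=A], rule ext)
    fix a l show "(v(i := a) \<circ> \<sigma>) l = ((v \<circ> \<sigma>)(inv \<sigma> i := a)) l"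
      using permutes_inverses[OF assms(2)] by (auto simp: fun_upd_def)
  qed
  then show "linear (\<lambda>a. A (v(i := a) \<circ> \<sigma>))" using mlin_lin[OF assms(1) ii] by simp
qed

lemma mlin_fix_tail:
  fixes A :: "(nat \<Rightarrow> 'e::real_vector) \<Rightarrow> 'w::real_vector"
  assumes "mlin j A" "k \<le> j"
  shows "mlin k (\<lambda>v. A (\<lambda>l. if l<k then v l else u l))"
  unfolding mlin_def
proof (intro conjI allI impI)
  fix v w :: "nat \<Rightarrow> 'e" assume "\<forall>i<k. v i = w i"
  then show "A (\<lambda>l. if l<k then v l else u l) = A (\<lambda>l. if l<k then w l else u l)"
    by (intro mlin_cong[OF assms(1)]) auto
next
  fix i v assume i: "i < k"
  have "linear (\<lambda>a. A ((\<lambda>l. if l<k then v l else u l)(i := a)))" using i assms(2) by (intro mlin_lin[OF assms(1)]) auto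
  moreover have "(\<lambda>a. A ((\<lambda>l. if l<k then v l else u l)(i := a))) = (\<lambda>a. A (\<lambda>l. if l<k then (v(i:=a)) l else u l))"
    using i by (intro ext arg_cong[where f=A]) (auto simp: fun_eq_iff)
  ultimately show "linear (\<lambda>a. A (\<lambda>l. if l<k then (v(i:=a)) l else u l))" by simp
qed

lemma msym_fix_tail:
  assumes "multilin_sym j A" "k \<le> j"
  shows "multilin_sym k (\<lambda>v. A (\<lambda>l. if l<k then v l else u l))"
  unfolding multilin_sym_iff
proof (intro conjI allI impI)
  show "mlin k (\<lambda>v. A (\<lambda>l. if l<k then v l else u l))" by (rule mlin_fix_tail[OF msym_mlin[OF assms(1)] assms(2)])
next
  fix \<pi> v assume p: "\<pi> permutes {..<k}"
  have p2: "\<pi> permutes {..<j}" using p permutes_subset assms(2) by fastforce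
  have "A (\<lambda>l. if l<k then (v \<circ> \<pi>) l else u l) = A ((\<lambda>l. if l<k then v l else u l) \<circ> \<pi>)"
  proof (rule arg_cong[where f=A], rule ext)
    fix l show "(if l<k then (v \<circ> \<pi>) l else u l) = ((\<lambda>l. if l<k then v l else u l) \<circ> \<pi>) l"
      using p permutes_in_image[OF p, of l] permutes_not_in[OF p, of l] by auto
  qed
  also have "\<dots> = A (\<lambda>l. if l<k then v l else u l)" by (rule msym_perm[OF assms(1) p2])
  finally show "A (\<lambda>l. if l<k then (v \<circ> \<pi>) l else u l) = A (\<lambda>l. if l<k then v l else u l)" .
qed

lemma msym_sum_fun:
  assumes "\<And>s. s \<in> S \<Longrightarrow> multilin_sym k (A s)"
  shows "multilin_sym k (\<lambda>v. \<Sum>s\<in>S. A s v)"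
proof -
  have "mlin k (\<lambda>v. \<Sum>s\<in>S. A s v)" using assms msym_mlin by (intro mlin_sum_fun) blast
  moreover have "(\<Sum>s\<in>S. A s (v \<circ> \<pi>)) = (\<Sum>s\<in>S. A s v)" if "\<pi> permutes {..<k}" for \<pi> v
    using assms msym_perm that by (intro sum.cong) blast+
  ultimately show ?thesis unfolding multilin_sym_iff by blast
qed

lemma msym_scaleR_fun:
  assumes "multilin_sym k A"
  shows "multilin_sym k (\<lambda>v. c *\<^sub>R A v)"
  using assms mlin_scaleR_fun unfolding multilin_sym_iff by auto

lemma msym_diff_fun:
  assumes "multilin_sym k A" "multilin_sym k B"
  shows "multilin_sym k (\<lambda>v. A v - B v)"
  using assms mlin_diff_fun unfolding multilin_sym_iff by auto


lemma msym_fix_last: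
  assumes "multilin_sym (Suc k) A"
  shows "multilin_sym k (\<lambda>v'. A (\<lambda>l. if l<k then v' l else u))"
  unfolding multilin_sym_iff mlin_def
proof (intro conjI allI impI)
  have ml: "mlin (Suc k) A" using msym_mlin[OF assms] .
  fix v w :: "nat \<Rightarrow> 'a" assume "\<forall>i<k. v i = w i"
  then show "A (\<lambda>l. if l<k then v l else u) = A (\<lambda>l. if l<k then w l else u)"
    by (intro mlin_cong[OF ml]) auto
next
  have ml: "mlin (Suc k) A" using msym_mlin[OF assms] .
  fix i v assume i: "i < k"
  have "linear (\<lambda>a. A ((\<lambda>l. if l<k then v l else u)(i := a)))" using i by (intro mlin_lin[OF ml]) auto
  moreover have "(\<lambda>a. A ((\<lambda>l. if l<k then v l else u)(i := a))) = (\<lambda>a. A (\<lambda>l. if l<k then (v(i:=a)) l else u))"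
    using i by (intro ext arg_cong[where f=A]) (auto simp: fun_eq_iff)
  ultimately show "linear (\<lambda>a. A (\<lambda>l. if l<k then (v(i:=a)) l else u))" by simp
next
  fix \<pi> v assume p: "\<pi> permutes {..<k}"
  have p2: "\<pi> permutes {..<Suc k}" using p permutes_subset by fastforce
  have "A (\<lambda>l. if l<k then (v \<circ> \<pi>) l else u) = A ((\<lambda>l. if l<k then v l else u) \<circ> \<pi>)"
  proof (rule arg_cong[where f=A], rule ext)
    fix l show "(if l<k then (v \<circ> \<pi>) l else u) = ((\<lambda>l. if l<k then v l else u) \<circ> \<pi>) l"
      using p permutes_in_image[OF p, of l] permutes_not_in[OF p, of l] by auto
  qed
  also have "\<dots> = A (\<lambda>l. if l<k then v l else u)" by (rule msym_perm[OF assms p2])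
  finally show "A (\<lambda>l. if l<k then (v \<circ> \<pi>) l else u) = A (\<lambda>l. if l<k then v l else u)" .
qed

lemma polar_step:
  fixes A :: "(nat \<Rightarrow> 'e::real_normed_vector) \<Rightarrow> 'w::real_normed_vector"
  assumes sym: "multilin_sym (Suc k) A" and c0: "c \<ge> 0"
    and H: "\<And>w. norm (A (\<lambda>_. w)) \<le> c * norm w ^ Suc k"
    and KM: "\<And>(cc::nat \<Rightarrow> 'w) B. (\<forall>s\<in>{0..1}. norm (\<Sum>k\<le>Suc k. s^k *\<^sub>R cc k) \<le> B) \<Longrightarrow> (\<forall>j\<le>Suc k. norm (cc j) \<le> KM * B)"
    and KM0: "KM \<ge> 1"
  shows "norm (A (\<lambda>l. if l<k then w else u)) \<le> KM * 2^Suc k * c * norm u * norm w ^ k"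
proof -
  have ml: "mlin (Suc k) A" using msym_mlin[OF sym] .
  show ?thesis
  proof (cases "u = 0 \<or> w = 0")
    case True
    show ?thesis
    proof (cases "u = 0")
      case True
      then have "A (\<lambda>l. if l<k then w else u) = 0" by (intro mlin_zero[OF ml, of k]) auto
      then show ?thesis using KM0 c0 by simp
    next
      case False
      then have w0: "w = 0" using True by simp
      show ?thesis
      proof (cases "k = 0")
        case True
        have "norm (A (\<lambda>l. if l<k then w else u)) = norm (A (\<lambda>_. u))"
          using True by (intro arg_cong[where f="\<lambda>z. norm (A z)"]) auto
        also have "\<dots> \<le> c * norm u" using H[of u] True by simp
        also have "\<dots> \<le> (KM * 2^Suc k) * (c * norm u)"
        proof -
          have t2: "(1::real) \<le> 2^Suc k" by (rule one_le_power) simp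
          have t3: "1 \<le> KM * 2^Suc k" using mult_mono[OF KM0 t2] KM0 by simp
          show ?thesis using mult_right_mono[OF t3, of "c * norm u"] c0 by simp
        qed
        also have "\<dots> = KM * 2^Suc k * c * norm u" by simp
        finally show ?thesis using True by simp
      next
        case False
        then have "A (\<lambda>l. if l<k then w else u) = 0" using w0 by (intro mlin_zero[OF ml, of 0]) auto
        then show ?thesis using KM0 c0 by simp
      qed
    qed
  next
    case False
    then have u0: "u \<noteq> 0" and w0: "w \<noteq> 0" by auto
    define r where "r = norm w"
    have r0: "r > 0" using w0 by (simp add: r_def)
    define u' where "u' = (r / norm u) *\<^sub>R u"
    have nu': "norm u' = r" using u0 r0 by (simp add: u'_def)
    define cc where "cc K = real (Suc k choose K) *\<^sub>R A (\<lambda>l. if l<K then u' else w)" for K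
    have poly: "A (\<lambda>_. s *\<^sub>R u' + w) = (\<Sum>K\<le>Suc k. s^K *\<^sub>R cc K)" for s
    proof -
      have "A (\<lambda>_. s *\<^sub>R u' + w) = A (\<lambda>l. if l < Suc k then s *\<^sub>R u' + w else 0)"
        by (rule mlin_cong[OF ml]) auto
      also have "\<dots> = (\<Sum>K\<le>Suc k. real (Suc k choose K) *\<^sub>R A (\<lambda>l. if l<K then s *\<^sub>R u' else if l<Suc k then w else 0))"
        by (rule msym_binom[OF sym order_refl])
      also have "\<dots> = (\<Sum>K\<le>Suc k. s^K *\<^sub>R cc K)"
      proof (rule sum.cong[OF refl])
        fix K assume K: "K \<in> {..Suc k}"
        have "A (\<lambda>l. if l<K then s *\<^sub>R u' else if l<Suc k then w else 0) =
            A (\<lambda>l. if l<K then s *\<^sub>R (\<lambda>l. if l<K then u' else w) l else (\<lambda>l. if l<K then u' else w) l)"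
          by (rule mlin_cong[OF ml]) auto
        also have "\<dots> = s^K *\<^sub>R A (\<lambda>l. if l<K then u' else w)"
          using mlin_scale_prefix[OF ml, of K "\<lambda>_. s" "\<lambda>l. if l<K then u' else w"] K by simp
        finally show "real (Suc k choose K) *\<^sub>R A (\<lambda>l. if l<K then s *\<^sub>R u' else if l<Suc k then w else 0) = s^K *\<^sub>R cc K"
          by (simp add: cc_def)
      qed
      finally show ?thesis .
    qed
    have bnd: "\<forall>s\<in>{0..1}. norm (\<Sum>K\<le>Suc k. s^K *\<^sub>R cc K) \<le> c * (2*r)^Suc k"
    proof
      fix s :: real assume s: "s \<in> {0..1}"
      have "norm (s *\<^sub>R u' + w) \<le> 2 * r"
        using s nu' norm_triangle_ineq[of "s *\<^sub>R u'" w] mult_left_le_one_le[of "norm w" s] by (auto simp: r_def)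
      then have "norm (s *\<^sub>R u' + w) ^ Suc k \<le> (2*r)^Suc k" by (intro power_mono) auto
      then have "c * norm (s *\<^sub>R u' + w) ^ Suc k \<le> c * (2*r)^Suc k" using c0 by (rule mult_left_mono)
      then show "norm (\<Sum>K\<le>Suc k. s^K *\<^sub>R cc K) \<le> c * (2*r)^Suc k"
        using H[of "s *\<^sub>R u' + w"] poly[of s] by simp
    qed
    have "norm (cc 1) \<le> KM * (c * (2*r)^Suc k)" using KM[OF bnd] by simp
    moreover have "cc 1 = real (Suc k) *\<^sub>R A (\<lambda>l. if l<k then w else u')"
    proof -
      have "A (\<lambda>l. if l<1 then u' else w) = A ((\<lambda>l. if l<k then w else u') \<circ> Transposition.transpose 0 k)"
        by (rule mlin_cong[OF ml]) (auto simp: Transposition.transpose_def)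
      also have "\<dots> = A (\<lambda>l. if l<k then w else u')"
        by (rule msym_perm[OF sym]) (rule permutes_swap_id, auto)
      finally show ?thesis by (simp add: cc_def)
    qed
    ultimately have "real (Suc k) * norm (A (\<lambda>l. if l<k then w else u')) \<le> KM * (c * (2*r)^Suc k)" by simp
    then have b1: "norm (A (\<lambda>l. if l<k then w else u')) \<le> KM * (c * (2*r)^Suc k)"
      by (rule order_trans[rotated]) (simp add: mult_le_cancel_right1)
    have "A (\<lambda>l. if l<k then w else u) = (norm u / r) *\<^sub>R A (\<lambda>l. if l<k then w else u')"
    proof -
      have "A (\<lambda>l. if l<k then w else u) = A ((\<lambda>l. if l<k then w else u')(k := (norm u / r) *\<^sub>R u'))"
        using u0 r0 by (intro mlin_cong[OF ml]) (auto simp: u'_def)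
      also have "\<dots> = (norm u / r) *\<^sub>R A ((\<lambda>l. if l<k then w else u')(k := u'))" by (rule mlin_scale[OF ml]) simp
      also have "(\<lambda>l. if l<k then w else u')(k := u') = (\<lambda>l. if l<k then w else u')" by auto
      finally show ?thesis .
    qed
    then have "norm (A (\<lambda>l. if l<k then w else u)) = (norm u / r) * norm (A (\<lambda>l. if l<k then w else u'))"
      using r0 by simp
    also have "\<dots> \<le> (norm u / r) * (KM * (c * (2*r)^Suc k))" using b1 r0 by (intro mult_left_mono) auto
    also have "\<dots> = KM * 2^Suc k * c * norm u * norm w ^ k" using r0 by (simp add: r_def power_mult_distrib field_simps)
    finally show ?thesis .
  qed
qed


lemma polarization:
  "\<exists>K\<ge>0. \<forall>(A::(nat\<Rightarrow>'e::real_normed_vector)\<Rightarrow>'w::real_normed_vector) c v. multilin_sym k A \<longrightarrow> c \<ge> 0 \<longrightarrow>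
     (\<forall>w. norm (A (\<lambda>_. w)) \<le> c * norm w ^ k) \<longrightarrow> norm (A v) \<le> K * c * (\<Prod>i<k. norm (v i))"
proof (induction k)
  case 0
  show ?case
  proof (rule exI[of _ 1], intro conjI allI impI)
    fix A :: "(nat\<Rightarrow>'e)\<Rightarrow>'w" and c :: real and v
    assume "multilin_sym 0 A" "c \<ge> 0" and H: "\<forall>w. norm (A (\<lambda>_. w)) \<le> c * norm w ^ 0"
    have "A v = A (\<lambda>_. 0)" by (rule mlin_cong[OF msym_mlin[OF \<open>multilin_sym 0 A\<close>]]) auto
    then show "norm (A v) \<le> 1 * c * (\<Prod>i<0. norm (v i))" using H by simp
  qed simp
next
  case (Suc k)
  obtain Kk where Kk: "Kk \<ge> 0" "\<And>(A::(nat\<Rightarrow>'e)\<Rightarrow>'w) c v. multilin_sym k A \<Longrightarrow> c \<ge> 0 \<Longrightarrow>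
     (\<forall>w. norm (A (\<lambda>_. w)) \<le> c * norm w ^ k) \<Longrightarrow> norm (A v) \<le> Kk * c * (\<Prod>i<k. norm (v i))"
    using Suc.IH by blast
  obtain KM0 where KM0: "KM0 \<ge> 0" "\<forall>(cc::nat \<Rightarrow> 'w) B. (\<forall>s\<in>{0..1}. norm (\<Sum>k\<le>Suc k. s^k *\<^sub>R cc k) \<le> B) \<longrightarrow> (\<forall>j\<le>Suc k. norm (cc j) \<le> KM0 * B)"
    using markov[of "Suc k"] by blast
  define KM where "KM = max KM0 1"
  have KMp: "\<forall>j\<le>Suc k. norm (cc j) \<le> KM * B" if H: "\<forall>s\<in>{0..1}. norm (\<Sum>k\<le>Suc k. s^k *\<^sub>R cc k) \<le> B" for cc :: "nat \<Rightarrow> 'w" and B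
  proof -
    have "(0::real) \<in> {0..1}" by simp
    then have "norm (\<Sum>k\<le>Suc k. (0::real)^k *\<^sub>R cc k) \<le> B" using H by blast
    then have B0: "B \<ge> 0" using norm_ge_zero order_trans by blast
    have "KM0 * B \<le> KM * B" using B0 by (intro mult_right_mono) (auto simp: KM_def)
    then show ?thesis using KM0(2) H by (meson order_trans)
  qed
  have KM1: "KM \<ge> 1" by (simp add: KM_def)
  show ?case
  proof (rule exI[of _ "Kk * KM * 2^Suc k"], intro conjI allI impI)
    show "Kk * KM * 2^Suc k \<ge> 0" using Kk KM1 by simp
    fix A :: "(nat\<Rightarrow>'e)\<Rightarrow>'w" and c :: real and v
    assume sym: "multilin_sym (Suc k) A" and c0: "c \<ge> 0" and H: "\<forall>w. norm (A (\<lambda>_. w)) \<le> c * norm w ^ Suc k"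
    define B' where "B' v' = A (\<lambda>l. if l<k then v' l else v k)" for v'
    have symB: "multilin_sym k B'" unfolding B'_def by (rule msym_fix_last[OF sym])
    have diag: "\<forall>w. norm (B' (\<lambda>_. w)) \<le> (KM * 2^Suc k * c * norm (v k)) * norm w ^ k"
      unfolding B'_def using polar_step[OF sym c0 _ KMp KM1] H by auto
    have c'0: "KM * 2^Suc k * c * norm (v k) \<ge> 0" using KM1 c0 by simp
    have "norm (B' v) \<le> Kk * (KM * 2^Suc k * c * norm (v k)) * (\<Prod>i<k. norm (v i))"
      by (rule Kk(2)[OF symB c'0 diag])
    moreover have "A v = B' v" unfolding B'_def
      by (rule mlin_cong[OF msym_mlin[OF sym]]) (auto simp: less_Suc_eq)
    ultimately show "norm (A v) \<le> Kk * KM * 2^Suc k * c * (\<Prod>i<Suc k. norm (v i))"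
      by (simp add: mult_ac)
  qed
qed


lemma lip_deg_bounds:
  assumes "\<gamma> \<ge> 1"
  shows "real (lip_deg \<gamma>) < \<gamma>" "\<gamma> \<le> real (lip_deg \<gamma>) + 1"
proof -
  have c1: "\<lceil>\<gamma>\<rceil> \<ge> 1" using assms by (simp add: one_le_ceiling)
  have e: "real (lip_deg \<gamma>) = real_of_int \<lceil>\<gamma>\<rceil> - 1" unfolding lip_deg_def using c1 by simp
  show "real (lip_deg \<gamma>) < \<gamma>" "\<gamma> \<le> real (lip_deg \<gamma>) + 1"
    unfolding e using ceiling_correct[of \<gamma>] by linarith+
qed

lemma lip_coll_mono:
  assumes "lip_coll \<gamma> M U g" "M \<le> M'"
  shows "lip_coll \<gamma> M' U g"
  unfolding lip_coll_def
proof (intro allI impI conjI ballI)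
  fix k assume k: "k \<le> lip_deg \<gamma>"
  fix x assume "x \<in> U"
  then show "multilin_sym k (g k x)" using assms(1) k unfolding lip_coll_def by blast
next
  fix k x v assume k: "k \<le> lip_deg \<gamma>" and x: "x \<in> U"
  have "norm (g k x v) \<le> M * (\<Prod>i<k. norm (v i))" using assms(1) k x unfolding lip_coll_def by blast
  also have "\<dots> \<le> M' * (\<Prod>i<k. norm (v i))" using assms(2) by (intro mult_right_mono prod_nonneg) auto
  finally show "norm (g k x v) \<le> M' * (\<Prod>i<k. norm (v i))" .
next
  fix k x y v assume k: "k \<le> lip_deg \<gamma>" and x: "x \<in> U" and y: "y \<in> U"
  have "norm (lip_rem (lip_deg \<gamma>) g k x y v) \<le> M * norm (x - y) powr (\<gamma> - real k) * (\<Prod>i<k. norm (v i))"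
    using assms(1) k x y unfolding lip_coll_def by blast
  also have "\<dots> \<le> M' * norm (x - y) powr (\<gamma> - real k) * (\<Prod>i<k. norm (v i))"
    using assms(2) by (intro mult_right_mono prod_nonneg) auto
  finally show "norm (lip_rem (lip_deg \<gamma>) g k x y v) \<le> M' * norm (x - y) powr (\<gamma> - real k) * (\<Prod>i<k. norm (v i))" .
qed

lemma sum_triangle_swap:
  "(\<Sum>j\<le>(m::nat). \<Sum>K\<le>j. f j K) = (\<Sum>K\<le>m. \<Sum>j\<in>{K..m}. (f j K :: 'a::comm_monoid_add))"
proof (induction m)
  case 0
  then show ?case by simp
next
  case (Suc m)
  have "(\<Sum>K\<le>Suc m. \<Sum>j\<in>{K..Suc m}. f j K) = (\<Sum>K\<le>Suc m. (\<Sum>j\<in>{K..m}. f j K) + f (Suc m) K)"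
  proof (rule sum.cong[OF refl])
    fix K assume "K \<in> {..Suc m}"
    then have "K \<le> Suc m" by simp
    then show "(\<Sum>j\<in>{K..Suc m}. f j K) = (\<Sum>j\<in>{K..m}. f j K) + f (Suc m) K"
      by (simp add: atLeastAtMostSuc_conv add.commute)
  qed
  also have "\<dots> = (\<Sum>K\<le>Suc m. \<Sum>j\<in>{K..m}. f j K) + (\<Sum>K\<le>Suc m. f (Suc m) K)" by (rule sum.distrib)
  also have "(\<Sum>K\<le>Suc m. \<Sum>j\<in>{K..m}. f j K) = (\<Sum>K\<le>m. \<Sum>j\<in>{K..m}. f j K)" by simp
  finally show ?case using Suc by simp
qed

lemma lip_reexpand:
  fixes g :: "nat \<Rightarrow> 'e::real_normed_vector \<Rightarrow> (nat \<Rightarrow> 'e) \<Rightarrow> 'w::real_normed_vector"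
  assumes sym: "\<And>j. j \<le> m \<Longrightarrow> multilin_sym j (g j y)"
  shows "(\<Sum>j\<le>m. (1 / fact j) *\<^sub>R g j y (\<lambda>_. (x - y) + t)) =
    (\<Sum>k\<le>m. (1 / fact k) *\<^sub>R (g k x (\<lambda>_. t) - lip_rem m g k x y (\<lambda>_. t)))"
proof -
  define d where "d = x - y"
  define G where "G j K = g j y (\<lambda>l. if l<K then t else d)" for j K
  have L: "(1 / fact j) *\<^sub>R g j y (\<lambda>_. d + t) = (\<Sum>K\<le>j. (1 / (fact K * fact (j - K))) *\<^sub>R G j K)" if j: "j \<le> m" for j
  proof -
    have "g j y (\<lambda>_. d + t) = g j y (\<lambda>l. if l<j then t + d else 0)"
      by (rule mlin_cong[OF msym_mlin[OF sym[OF j]]]) (simp add: add.commute)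
    also have "\<dots> = (\<Sum>K\<le>j. real (j choose K) *\<^sub>R g j y (\<lambda>l. if l<K then t else if l<j then d else 0))"
      by (rule msym_binom[OF sym[OF j] order_refl])
    also have "\<dots> = (\<Sum>K\<le>j. real (j choose K) *\<^sub>R G j K)"
      unfolding G_def by (intro sum.cong refl arg_cong2[where f=scaleR] mlin_cong[OF msym_mlin[OF sym[OF j]]]) auto
    finally have "(1 / fact j) *\<^sub>R g j y (\<lambda>_. d + t) = (\<Sum>K\<le>j. ((1 / fact j) * real (j choose K)) *\<^sub>R G j K)"
      by (simp add: scaleR_sum_right)
    also have "\<dots> = (\<Sum>K\<le>j. (1 / (fact K * fact (j - K))) *\<^sub>R G j K)"
    proof (rule sum.cong[OF refl])
      fix K assume "K \<in> {..j}"
      then have K: "K \<le> j" by simp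
      have "(1 / fact j) * real (j choose K) = 1 / (fact K * fact (j - K))"
        using binomial_fact[OF K, where 'a=real] by (simp add: field_simps)
      then show "((1 / fact j) * real (j choose K)) *\<^sub>R G j K = (1 / (fact K * fact (j - K))) *\<^sub>R G j K" by simp
    qed
    finally show ?thesis .
  qed
  have R: "(1 / fact k) *\<^sub>R (g k x (\<lambda>_. t) - lip_rem m g k x y (\<lambda>_. t)) = (\<Sum>j\<in>{k..m}. (1 / (fact k * fact (j - k))) *\<^sub>R G j k)" for k
  proof -
    have "g k x (\<lambda>_. t) - lip_rem m g k x y (\<lambda>_. t) = (\<Sum>j=k..m. (1 / fact (j - k)) *\<^sub>R G j k)"
      unfolding lip_rem_def G_def d_def by simp
    then show ?thesis by (simp add: scaleR_sum_right)
  qed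
  have "(\<Sum>j\<le>m. (1 / fact j) *\<^sub>R g j y (\<lambda>_. d + t)) = (\<Sum>j\<le>m. \<Sum>K\<le>j. (1 / (fact K * fact (j - K))) *\<^sub>R G j K)"
    by (intro sum.cong refl L) simp
  also have "\<dots> = (\<Sum>K\<le>m. \<Sum>j\<in>{K..m}. (1 / (fact K * fact (j - K))) *\<^sub>R G j K)" by (rule sum_triangle_swap)
  also have "\<dots> = (\<Sum>k\<le>m. (1 / fact k) *\<^sub>R (g k x (\<lambda>_. t) - lip_rem m g k x y (\<lambda>_. t)))" by (simp only: R)
  finally show ?thesis unfolding d_def .
qed

lemma lip_rem_same:
  fixes g :: "nat \<Rightarrow> 'e::real_normed_vector \<Rightarrow> (nat \<Rightarrow> 'e) \<Rightarrow> 'w::real_normed_vector"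
  assumes k: "k \<le> m" and ml: "\<And>j. j \<le> m \<Longrightarrow> mlin j (g j x)"
  shows "lip_rem m g k x x v = 0"
proof -
  have "(\<Sum>j=k..m. (1 / fact (j - k)) *\<^sub>R g j x (\<lambda>i. if i < k then v i else x - x)) =
      (1 / fact (k - k)) *\<^sub>R g k x (\<lambda>i. if i < k then v i else x - x) + (\<Sum>j=Suc k..m. (1 / fact (j - k)) *\<^sub>R g j x (\<lambda>i. if i < k then v i else x - x))"
    by (rule sum.atLeast_Suc_atMost[OF k])
  also have "(\<Sum>j=Suc k..m. (1 / fact (j - k)) *\<^sub>R g j x (\<lambda>i. if i < k then v i else x - x)) = 0"
  proof (rule sum.neutral, rule ballI)
    fix j assume "j \<in> {Suc k..m}"
    then have j: "k < j" "j \<le> m" by auto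
    have "g j x (\<lambda>i. if i < k then v i else x - x) = 0" by (rule mlin_zero[OF ml[OF j(2)] j(1)]) simp
    then show "(1 / fact (j - k)) *\<^sub>R g j x (\<lambda>i. if i < k then v i else x - x) = 0" by simp
  qed
  also have "g k x (\<lambda>i. if i < k then v i else x - x) = g k x v" by (rule mlin_cong[OF ml[OF k]]) simp
  finally show ?thesis unfolding lip_rem_def by simp
qed

lemma lip_rem_msym:
  fixes g :: "nat \<Rightarrow> 'e::real_normed_vector \<Rightarrow> (nat \<Rightarrow> 'e) \<Rightarrow> 'w::real_normed_vector"
  assumes k: "k \<le> m" and sx: "multilin_sym k (g k x)" and sy: "\<And>j. j \<le> m \<Longrightarrow> multilin_sym j (g j y)"
  shows "multilin_sym k (lip_rem m g k x y)"
proof -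
  have e: "lip_rem m g k x y = (\<lambda>v. g k x v - (\<Sum>j\<in>{k..m}. (1 / fact (j - k)) *\<^sub>R g j y (\<lambda>i. if i < k then v i else (\<lambda>_. x - y) i)))"
    by (simp add: lip_rem_def fun_eq_iff)
  show ?thesis unfolding e
    by (intro msym_diff_fun sx msym_sum_fun msym_scaleR_fun msym_fix_tail[OF sy]) auto
qed

lemma lip_coll_translate:
  fixes g :: "nat \<Rightarrow> 'e::real_normed_vector \<Rightarrow> (nat \<Rightarrow> 'e) \<Rightarrow> 'w::real_normed_vector"
  assumes "lip_coll \<gamma> M UNIV g"
  shows "lip_coll \<gamma> M S (\<lambda>k z. g k (z + a))"
proof -
  have e: "lip_rem m (\<lambda>k z. g k (z + a)) k z z' v = lip_rem m g k (z + a) (z' + a) v" for m k z z' v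
  proof -
    have e1: "z + a - (z' + a) = z - z'" by (simp add: algebra_simps)
    show ?thesis unfolding lip_rem_def e1 ..
  qed
  show ?thesis unfolding lip_coll_def e
  proof (intro allI impI conjI ballI)
    fix k x y v assume k: "k \<le> lip_deg \<gamma>"
    show "multilin_sym k (g k (x + a))" using assms k unfolding lip_coll_def by blast
    show "norm (g k (x + a) v) \<le> M * (\<Prod>i<k. norm (v i))" using assms k unfolding lip_coll_def by blast
    have "norm (lip_rem (lip_deg \<gamma>) g k (x + a) (y + a) v) \<le> M * norm ((x + a) - (y + a)) powr (\<gamma> - real k) * (\<Prod>i<k. norm (v i))"
      using assms k unfolding lip_coll_def by blast
    moreover have "(x + a) - (y + a) = x - y" by (simp add: algebra_simps)
    ultimately show "norm (lip_rem (lip_deg \<gamma>) g k (x + a) (y + a) v) \<le> M * norm (x - y) powr (\<gamma> - real k) * (\<Prod>i<k. norm (v i))"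
      by simp
  qed
qed


definition off :: "(nat \<Rightarrow> nat) \<Rightarrow> nat \<Rightarrow> nat" where "off \<iota> l = (\<Sum>l'<l. \<iota> l')"

definition Cset :: "nat \<Rightarrow> nat \<Rightarrow> nat \<Rightarrow> (nat \<Rightarrow> nat) set" where
  "Cset m j k = {\<iota> \<in> {..<j} \<rightarrow>\<^sub>E {1..m}. off \<iota> j = k}"

definition Aterm where
  "Aterm a b F j \<iota> x v = a j (F x) (\<lambda>l. b (\<iota> l) x (\<lambda>i. v (off \<iota> l + i)))"

definition cjet :: "nat \<Rightarrow> (nat \<Rightarrow> 'e \<Rightarrow> (nat \<Rightarrow> 'e) \<Rightarrow> 'w::real_vector) \<Rightarrow> (nat \<Rightarrow> 'd \<Rightarrow> (nat \<Rightarrow> 'd) \<Rightarrow> 'e)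
    \<Rightarrow> ('d \<Rightarrow> 'e) \<Rightarrow> nat \<Rightarrow> 'd \<Rightarrow> (nat \<Rightarrow> 'd) \<Rightarrow> 'w" where
  "cjet m a b F k x v = (\<Sum>j\<le>m. \<Sum>\<iota>\<in>Cset m j k. (1 / (fact j * (\<Prod>l<j. fact (\<iota> l)))) *\<^sub>R
      (\<Sum>\<sigma>\<in>{\<sigma>. \<sigma> permutes {..<k}}. Aterm a b F j \<iota> x (v \<circ> \<sigma>)))"

lemma off_Suc: "off \<iota> (Suc l) = off \<iota> l + \<iota> l"
  by (simp add: off_def)

lemma off_mono: "l \<le> l' \<Longrightarrow> off \<iota> l \<le> off \<iota> l'"
  unfolding off_def by (rule sum_mono2) auto

lemma block_exists: "p < off \<iota> j \<Longrightarrow> \<exists>l<j. off \<iota> l \<le> p \<and> p < off \<iota> l + \<iota> l"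
proof (induction j)
  case 0
  then show ?case by (simp add: off_def)
next
  case (Suc j)
  show ?case
  proof (cases "p < off \<iota> j")
    case True
    then show ?thesis using Suc.IH by (meson less_SucI)
  next
    case False
    then show ?thesis using Suc.prems by (intro exI[of _ j]) (auto simp: off_Suc)
  qed
qed

lemma block_unique:
  assumes "off \<iota> l \<le> p" "p < off \<iota> l + \<iota> l" "off \<iota> l' \<le> p" "p < off \<iota> l' + \<iota> l'"
  shows "l = l'"
proof (rule ccontr)
  assume "l \<noteq> l'"
  then consider "l < l'" | "l' < l" by linarith
  then show False
  proof cases
    case 1
    then have "off \<iota> (Suc l) \<le> off \<iota> l'" by (intro off_mono) simp
    then show False using assms by (simp add: off_Suc)
  next
    case 2
    then have "off \<iota> (Suc l') \<le> off \<iota> l" by (intro off_mono) simp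
    then show False using assms by (simp add: off_Suc)
  qed
qed

lemma prod_lessThan_add: "(\<Prod>p<(a::nat) + b. g p) = (\<Prod>p<a. g p) * (\<Prod>i<b. g (a + i))"
  by (induction b) (simp_all add: mult_ac)

lemma block_prod: "(\<Prod>l<j. \<Prod>i<\<iota> l. g (off \<iota> l + i)) = (\<Prod>p<off \<iota> j. g p)"
  by (induction j) (simp_all add: off_Suc prod_lessThan_add off_def)

lemma finite_Cset: "finite (Cset m j k)"
  unfolding Cset_def by (rule finite_subset[of _ "{..<j} \<rightarrow>\<^sub>E {1..m}"]) (auto intro: finite_PiE)

lemma Cset_range: "\<iota> \<in> Cset m j k \<Longrightarrow> l < j \<Longrightarrow> \<iota> l \<in> {1..m}"
  using PiE_mem[of \<iota> "{..<j}" "\<lambda>_. {1..m}" l] unfolding Cset_def by blast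

lemma Cset_off: "\<iota> \<in> Cset m j k \<Longrightarrow> off \<iota> j = k"
  unfolding Cset_def by blast

lemma mlin_Aterm:
  fixes a :: "nat \<Rightarrow> 'e::real_vector \<Rightarrow> (nat \<Rightarrow> 'e) \<Rightarrow> 'w::real_vector"
    and b :: "nat \<Rightarrow> 'd \<Rightarrow> (nat \<Rightarrow> 'd::real_vector) \<Rightarrow> 'e"
  assumes ma: "mlin j (a j (F x))" and mb: "\<And>l. l < j \<Longrightarrow> mlin (\<iota> l) (b (\<iota> l) x)"
  shows "mlin (off \<iota> j) (Aterm a b F j \<iota> x)"
  unfolding mlin_def
proof (intro conjI allI impI)
  fix v w :: "nat \<Rightarrow> 'd" assume H: "\<forall>i<off \<iota> j. v i = w i"
  show "Aterm a b F j \<iota> x v = Aterm a b F j \<iota> x w" unfolding Aterm_def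
  proof (rule mlin_cong[OF ma])
    fix l assume l: "l < j"
    show "b (\<iota> l) x (\<lambda>i. v (off \<iota> l + i)) = b (\<iota> l) x (\<lambda>i. w (off \<iota> l + i))"
    proof (rule mlin_cong[OF mb[OF l]])
      fix i assume i: "i < \<iota> l"
      have "off \<iota> (Suc l) \<le> off \<iota> j" using l by (intro off_mono) simp
      then have "off \<iota> l + i < off \<iota> j" using i by (simp add: off_Suc)
      then show "v (off \<iota> l + i) = w (off \<iota> l + i)" using H by auto
    qed
  qed
next
  fix p v assume p: "p < off \<iota> j"
  obtain l where l: "l < j" "off \<iota> l \<le> p" "p < off \<iota> l + \<iota> l" using block_exists[OF p] by blast
  define W where "W = (\<lambda>l'. b (\<iota> l') x (\<lambda>i. v (off \<iota> l' + i)))"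
  define V where "V = (\<lambda>i. v (off \<iota> l + i))"
  have eq: "(\<lambda>z. Aterm a b F j \<iota> x (v(p := z))) = (\<lambda>z. a j (F x) (W(l := z))) \<circ> (\<lambda>z. b (\<iota> l) x (V(p - off \<iota> l := z)))"
  proof (rule ext)
    fix z
    show "Aterm a b F j \<iota> x (v(p := z)) = ((\<lambda>z. a j (F x) (W(l := z))) \<circ> (\<lambda>z. b (\<iota> l) x (V(p - off \<iota> l := z)))) z"
      unfolding Aterm_def o_def
    proof (rule mlin_cong[OF ma])
      fix l' assume l': "l' < j"
      show "b (\<iota> l') x (\<lambda>i. (v(p := z)) (off \<iota> l' + i)) = (W(l := b (\<iota> l) x (V(p - off \<iota> l := z)))) l'"
      proof (cases "l' = l")
        case True
        have "(\<lambda>i. (v(p := z)) (off \<iota> l + i)) = V(p - off \<iota> l := z)"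
          using l by (auto simp: V_def fun_eq_iff)
        then show ?thesis using True by simp
      next
        case False
        have "b (\<iota> l') x (\<lambda>i. (v(p := z)) (off \<iota> l' + i)) = b (\<iota> l') x (\<lambda>i. v (off \<iota> l' + i))"
        proof (rule mlin_cong[OF mb[OF l']])
          fix i assume i: "i < \<iota> l'"
          have "off \<iota> l' + i \<noteq> p"
          proof
            assume "off \<iota> l' + i = p"
            then have "l' = l" using block_unique[of \<iota> l' p l] l i by simp
            then show False using False by simp
          qed
          then show "(v(p := z)) (off \<iota> l' + i) = v (off \<iota> l' + i)" by simp
        qed
        then show ?thesis using False by (simp add: W_def)
      qed
    qed
  qed
  have lin1: "linear (\<lambda>z. a j (F x) (W(l := z)))" by (rule mlin_lin[OF ma l(1)])
  have lin2: "linear (\<lambda>z. b (\<iota> l) x (V(p - off \<iota> l := z)))" by (rule mlin_lin[OF mb[OF l(1)]]) (use l in auto)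
  show "linear (\<lambda>z. Aterm a b F j \<iota> x (v(p := z)))" unfolding eq by (rule linear_compose[OF lin2 lin1])
qed

lemma sum_perm_invariant:
  assumes "\<pi> permutes {..<k}"
  shows "(\<Sum>\<sigma>\<in>{\<sigma>. \<sigma> permutes {..<k}}. T ((v \<circ> \<pi>) \<circ> \<sigma>)) = (\<Sum>\<sigma>\<in>{\<sigma>. \<sigma> permutes {..<k}}. T (v \<circ> \<sigma>))"
proof (rule sum.reindex_bij_witness[of _ "\<lambda>\<sigma>. inv \<pi> \<circ> \<sigma>" "\<lambda>\<sigma>. \<pi> \<circ> \<sigma>"])
  fix \<sigma> assume "\<sigma> \<in> {\<sigma>. \<sigma> permutes {..<k}}"
  then have s: "\<sigma> permutes {..<k}" by simp
  show "inv \<pi> \<circ> (\<pi> \<circ> \<sigma>) = \<sigma>" using permutes_inv_o(2)[OF assms] by (simp add: o_assoc)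
  show "\<pi> \<circ> \<sigma> \<in> {\<sigma>. \<sigma> permutes {..<k}}" using permutes_compose[OF s assms] by simp
  show "T (v \<circ> (\<pi> \<circ> \<sigma>)) = T ((v \<circ> \<pi>) \<circ> \<sigma>)" by (simp add: o_assoc)
next
  fix \<sigma> assume "\<sigma> \<in> {\<sigma>. \<sigma> permutes {..<k}}"
  then have s: "\<sigma> permutes {..<k}" by simp
  show "\<pi> \<circ> (inv \<pi> \<circ> \<sigma>) = \<sigma>" using permutes_inv_o(1)[OF assms] by (simp add: o_assoc)
  show "inv \<pi> \<circ> \<sigma> \<in> {\<sigma>. \<sigma> permutes {..<k}}" using permutes_compose[OF s permutes_inv[OF assms]] by simp
qed

lemma msym_cjet:
  assumes sa: "\<And>j. j \<le> m \<Longrightarrow> multilin_sym j (a j (F x))" and sb: "\<And>i. i \<le> m \<Longrightarrow> multilin_sym i (b i x)"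
  shows "multilin_sym k (cjet m a b F k x)"
  unfolding multilin_sym_iff
proof (intro conjI allI impI)
  have e: "cjet m a b F k x = (\<lambda>v. \<Sum>j\<le>m. \<Sum>\<iota>\<in>Cset m j k. (1 / (fact j * (\<Prod>l<j. fact (\<iota> l)))) *\<^sub>R
      (\<Sum>\<sigma>\<in>{\<sigma>. \<sigma> permutes {..<k}}. Aterm a b F j \<iota> x (v \<circ> \<sigma>)))"
    by (simp add: cjet_def fun_eq_iff)
  have mA: "mlin k (Aterm a b F j \<iota> x)" if j: "j \<le> m" and i: "\<iota> \<in> Cset m j k" for j \<iota>
  proof -
    have "mlin (off \<iota> j) (Aterm a b F j \<iota> x)"
    proof (rule mlin_Aterm)
      show "mlin j (a j (F x))" by (rule msym_mlin[OF sa[OF j]])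
      fix l assume "l < j"
      then have "\<iota> l \<le> m" using Cset_range[OF i] by auto
      then show "mlin (\<iota> l) (b (\<iota> l) x)" by (rule msym_mlin[OF sb])
    qed
    then show ?thesis using Cset_off[OF i] by simp
  qed
  show "mlin k (cjet m a b F k x)" unfolding e
    by (intro mlin_sum_fun mlin_scaleR_fun mlin_perm_fun mA) auto
next
  fix \<pi> v assume p: "\<pi> permutes {..<k}"
  show "cjet m a b F k x (v \<circ> \<pi>) = cjet m a b F k x v"
    unfolding cjet_def by (simp only: sum_perm_invariant[OF p])
qed

lemma norm_Aterm:
  assumes ba: "\<And>u. norm (a j (F x) u) \<le> Ma * (\<Prod>l<j. norm (u l))"
    and bb: "\<And>l u. l < j \<Longrightarrow> norm (b (\<iota> l) x u) \<le> Mb * (\<Prod>i<\<iota> l. norm (u i))"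
    and Ma: "Ma \<ge> 0" and Mb: "Mb \<ge> 0"
  shows "norm (Aterm a b F j \<iota> x v) \<le> Ma * Mb^j * (\<Prod>p<off \<iota> j. norm (v p))"
proof -
  have "norm (Aterm a b F j \<iota> x v) \<le> Ma * (\<Prod>l<j. norm (b (\<iota> l) x (\<lambda>i. v (off \<iota> l + i))))"
    unfolding Aterm_def by (rule ba)
  also have "\<dots> \<le> Ma * (\<Prod>l<j. Mb * (\<Prod>i<\<iota> l. norm (v (off \<iota> l + i))))"
    by (intro mult_left_mono prod_mono Ma) (auto intro: bb)
  also have "\<dots> = Ma * Mb^j * (\<Prod>p<off \<iota> j. norm (v p))"
    by (simp add: prod.distrib block_prod[where g="\<lambda>p. norm (v p)"] mult_ac)
  finally show ?thesis .
qed

definition Cjb :: "nat \<Rightarrow> real \<Rightarrow> real \<Rightarrow> nat \<Rightarrow> real" where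
  "Cjb m Ma Mb k = (\<Sum>j\<le>m. \<Sum>\<iota>\<in>Cset m j k. (1 / (fact j * (\<Prod>l<j. fact (\<iota> l)))) * (fact k * (Ma * Mb^j)))"

lemma norm_cjet:
  assumes ba: "\<And>j u. j \<le> m \<Longrightarrow> norm (a j (F x) u) \<le> Ma * (\<Prod>l<j. norm (u l))"
    and bb: "\<And>i u. i \<le> m \<Longrightarrow> norm (b i x u) \<le> Mb * (\<Prod>l<i. norm (u l))"
    and Ma: "Ma \<ge> 0" and Mb: "Mb \<ge> 0"
  shows "norm (cjet m a b F k x v) \<le> Cjb m Ma Mb k * (\<Prod>p<k. norm (v p))"
proof -
  have T: "norm (\<Sum>\<sigma>\<in>{\<sigma>. \<sigma> permutes {..<k}}. Aterm a b F j \<iota> x (v \<circ> \<sigma>)) \<le> fact k * (Ma * Mb^j) * (\<Prod>p<k. norm (v p))"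
    if j: "j \<le> m" and i: "\<iota> \<in> Cset m j k" for j \<iota>
  proof -
    have "norm (\<Sum>\<sigma>\<in>{\<sigma>. \<sigma> permutes {..<k}}. Aterm a b F j \<iota> x (v \<circ> \<sigma>)) \<le>
        (\<Sum>\<sigma>\<in>{\<sigma>. \<sigma> permutes {..<k}}. Ma * Mb^j * (\<Prod>p<k. norm (v p)))"
    proof (rule order_trans[OF norm_sum sum_mono])
      fix \<sigma> assume "\<sigma> \<in> {\<sigma>. \<sigma> permutes {..<k}}"
      then have s: "\<sigma> permutes {..<k}" by simp
      have "norm (Aterm a b F j \<iota> x (v \<circ> \<sigma>)) \<le> Ma * Mb^j * (\<Prod>p<off \<iota> j. norm ((v \<circ> \<sigma>) p))"
      proof (rule norm_Aterm[OF _ _ Ma Mb])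
        show "norm (a j (F x) u) \<le> Ma * (\<Prod>l<j. norm (u l))" for u by (rule ba[OF j])
        fix l u assume "l < j"
        then have "\<iota> l \<le> m" using Cset_range[OF i] by auto
        then show "norm (b (\<iota> l) x u) \<le> Mb * (\<Prod>i<\<iota> l. norm (u i))" by (rule bb)
      qed
      also have "(\<Prod>p<off \<iota> j. norm ((v \<circ> \<sigma>) p)) = (\<Prod>p<k. norm (v p))"
        using Cset_off[OF i] prod.permute[OF s, of "\<lambda>p. norm (v p)"] by (simp add: o_def)
      finally show "norm (Aterm a b F j \<iota> x (v \<circ> \<sigma>)) \<le> Ma * Mb^j * (\<Prod>p<k. norm (v p))" .
    qed
    also have "\<dots> = fact k * (Ma * Mb^j) * (\<Prod>p<k. norm (v p))"
    proof -
      have cp: "card {\<sigma>. \<sigma> permutes {..<k}} = fact k" by (rule card_permutations) simp_all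
      show ?thesis by (simp add: cp)
    qed
    finally show ?thesis .
  qed
  have "norm (cjet m a b F k x v) \<le> (\<Sum>j\<le>m. \<Sum>\<iota>\<in>Cset m j k. (1 / (fact j * (\<Prod>l<j. fact (\<iota> l)))) *
      (fact k * (Ma * Mb^j) * (\<Prod>p<k. norm (v p))))"
    unfolding cjet_def
  proof (rule order_trans[OF norm_sum sum_mono], rule order_trans[OF norm_sum sum_mono])
    fix j \<iota> assume j: "j \<in> {..m}" and i: "\<iota> \<in> Cset m j k"
    have "0 < fact j * (\<Prod>l<j. fact (\<iota> l) :: real)" by (intro mult_pos_pos prod_pos) auto
    then have c0: "0 \<le> 1 / (fact j * (\<Prod>l<j. fact (\<iota> l)) :: real)" by simp
    show "norm ((1 / (fact j * (\<Prod>l<j. fact (\<iota> l)))) *\<^sub>R (\<Sum>\<sigma>\<in>{\<sigma>. \<sigma> permutes {..<k}}. Aterm a b F j \<iota> x (v \<circ> \<sigma>)))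
        \<le> (1 / (fact j * (\<Prod>l<j. fact (\<iota> l)))) * (fact k * (Ma * Mb^j) * (\<Prod>p<k. norm (v p)))"
      unfolding norm_scaleR abs_of_nonneg[OF c0] using T[of j \<iota>] j i by (intro mult_left_mono c0) auto
  qed
  also have "\<dots> = Cjb m Ma Mb k * (\<Prod>p<k. norm (v p))"
    unfolding Cjb_def sum_distrib_right by (intro sum.cong refl) (simp add: mult_ac)
  finally show ?thesis .
qed

lemma diag_cjet:
  assumes ma: "\<And>j. j \<le> m \<Longrightarrow> mlin j (a j (F x))"
  shows "cjet m a b F k x (\<lambda>_. t) = fact k *\<^sub>R (\<Sum>j\<le>m. \<Sum>\<iota>\<in>Cset m j k. (1 / fact j) *\<^sub>R
      a j (F x) (\<lambda>l. (1 / fact (\<iota> l)) *\<^sub>R b (\<iota> l) x (\<lambda>_. t)))"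
proof -
  have "cjet m a b F k x (\<lambda>_. t) = (\<Sum>j\<le>m. \<Sum>\<iota>\<in>Cset m j k. fact k *\<^sub>R ((1 / fact j) *\<^sub>R
      a j (F x) (\<lambda>l. (1 / fact (\<iota> l)) *\<^sub>R b (\<iota> l) x (\<lambda>_. t))))"
    unfolding cjet_def
  proof (intro sum.cong refl)
    fix j \<iota> assume j: "j \<in> {..m}"
    have a: "Aterm a b F j \<iota> x ((\<lambda>_. t) \<circ> \<sigma>) = a j (F x) (\<lambda>l. b (\<iota> l) x (\<lambda>_. t))" for \<sigma>
      by (simp add: Aterm_def o_def)
    have b: "a j (F x) (\<lambda>l. (1 / fact (\<iota> l)) *\<^sub>R b (\<iota> l) x (\<lambda>_. t)) = (\<Prod>l<j. 1 / fact (\<iota> l)) *\<^sub>R a j (F x) (\<lambda>l. b (\<iota> l) x (\<lambda>_. t))"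
      by (rule mlin_scale_all[OF ma]) (use j in simp)
    have cp: "card {\<sigma>. \<sigma> permutes {..<k}} = fact k" by (rule card_permutations) simp_all
    show "(1 / (fact j * (\<Prod>l<j. fact (\<iota> l)))) *\<^sub>R (\<Sum>\<sigma>\<in>{\<sigma>. \<sigma> permutes {..<k}}. Aterm a b F j \<iota> x ((\<lambda>_. t) \<circ> \<sigma>)) =
        fact k *\<^sub>R ((1 / fact j) *\<^sub>R a j (F x) (\<lambda>l. (1 / fact (\<iota> l)) *\<^sub>R b (\<iota> l) x (\<lambda>_. t)))"
      unfolding a b by (simp add: cp prod_dividef sum_constant_scaleR field_simps)
  qed
  then show ?thesis by (simp add: scaleR_sum_right)
qed


lemma norm_inv_fact_le: "norm ((1 / fact j) *\<^sub>R y) \<le> norm y"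
proof -
  have f: "1 / (fact j :: real) \<le> 1" using fact_ge_1[of j, where 'a=real] by simp
  show ?thesis using mult_right_mono[OF f norm_ge_zero[of y]] by simp
qed

locale compo =
  fixes \<gamma> :: real and a :: "nat \<Rightarrow> 'e::real_normed_vector \<Rightarrow> (nat \<Rightarrow> 'e) \<Rightarrow> 'w::real_normed_vector"
    and b :: "nat \<Rightarrow> 'd::real_normed_vector \<Rightarrow> (nat \<Rightarrow> 'd) \<Rightarrow> 'e" and F :: "'d \<Rightarrow> 'e"
    and U :: "'d set" and V :: "'e set" and Ma Mb :: real
  assumes g1: "\<gamma> \<ge> 1" and la: "lip_coll \<gamma> Ma V a" and lb: "lip_coll \<gamma> Mb U b"
    and Fb: "\<And>z v. z \<in> U \<Longrightarrow> b 0 z v = F z" and FUV: "\<And>z. z \<in> U \<Longrightarrow> F z \<in> V"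
    and Ma0: "Ma \<ge> 0" and Mb0: "Mb \<ge> 0"
begin

abbreviation "m \<equiv> lip_deg \<gamma>"

lemma m_lt: "real m < \<gamma>" and m_ge: "\<gamma> \<le> real m + 1"
  using lip_deg_bounds[OF g1] by auto

lemma sa: "u \<in> V \<Longrightarrow> j \<le> m \<Longrightarrow> multilin_sym j (a j u)"
  using la unfolding lip_coll_def by blast
lemma ba: "u \<in> V \<Longrightarrow> j \<le> m \<Longrightarrow> norm (a j u v) \<le> Ma * (\<Prod>i<j. norm (v i))"
  using la unfolding lip_coll_def by blast
lemma ra: "u \<in> V \<Longrightarrow> u' \<in> V \<Longrightarrow> k \<le> m \<Longrightarrow> norm (lip_rem m a k u u' v) \<le> Ma * norm (u - u') powr (\<gamma> - real k) * (\<Prod>i<k. norm (v i))"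
  using la unfolding lip_coll_def by blast
lemma sb: "u \<in> U \<Longrightarrow> j \<le> m \<Longrightarrow> multilin_sym j (b j u)"
  using lb unfolding lip_coll_def by blast
lemma bb: "u \<in> U \<Longrightarrow> j \<le> m \<Longrightarrow> norm (b j u v) \<le> Mb * (\<Prod>i<j. norm (v i))"
  using lb unfolding lip_coll_def by blast
lemma rb: "u \<in> U \<Longrightarrow> u' \<in> U \<Longrightarrow> k \<le> m \<Longrightarrow> norm (lip_rem m b k u u' v) \<le> Mb * norm (u - u') powr (\<gamma> - real k) * (\<Prod>i<k. norm (v i))"
  using lb unfolding lip_coll_def by blast

definition h where "h k x = cjet m a b F k x"
definition TF where "TF x t = (\<Sum>i\<le>m. (1 / fact i) *\<^sub>R b i x (\<lambda>_. t))"
definition Pp where "Pp u z = (\<Sum>j\<le>m. (1 / fact j) *\<^sub>R a j u (\<lambda>_. z))"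
definition Th where "Th x t = (\<Sum>k\<le>m. (1 / fact k) *\<^sub>R h k x (\<lambda>_. t))"
definition Ctail where "Ctail = (\<Sum>j\<le>m. real (card ({..<j} \<rightarrow>\<^sub>E {1..m})) * (Ma * Mb^j))"

lemma Ctail_nonneg: "Ctail \<ge> 0"
  unfolding Ctail_def using Ma0 Mb0 by (intro sum_nonneg) auto

lemma sh: assumes "x \<in> U" shows "multilin_sym k (h k x)"
proof -
  have "\<And>j. j \<le> m \<Longrightarrow> multilin_sym j (a j (F x))" by (rule sa[OF FUV[OF assms]])
  moreover have "\<And>i. i \<le> m \<Longrightarrow> multilin_sym i (b i x)" by (rule sb[OF assms])
  ultimately show ?thesis unfolding h_def by (rule msym_cjet)
qed

lemma faa:
  assumes x: "x \<in> U" and t: "norm t \<le> 1"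
  shows "norm (Pp (F x) (TF x t - F x) - Th x t) \<le> Ctail * norm t ^ Suc m"
proof -
  define q where "q i = (1 / fact i) *\<^sub>R b i x (\<lambda>_. t)" for i
  define A where "A j \<iota> = a j (F x) (\<lambda>l. q (\<iota> l))" for j \<iota>
  define P where "P j = {..<j} \<rightarrow>\<^sub>E {1..m}" for j :: nat
  have finP: "finite (P j)" for j unfolding P_def by (intro finite_PiE) auto
  have Fx: "F x \<in> V" by (rule FUV[OF x])
  have TFs: "TF x t - F x = (\<Sum>i\<in>{1..m}. q i)"
  proof -
    have "TF x t = (\<Sum>i\<in>{0..m}. q i)" unfolding TF_def q_def by (simp add: atMost_atLeast0)
    also have "\<dots> = q 0 + (\<Sum>i\<in>{Suc 0..m}. q i)" by (rule sum.atLeast_Suc_atMost) simp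
    also have "q 0 = F x" unfolding q_def using Fb[OF x] by simp
    finally show ?thesis by simp
  qed
  have P1: "Pp (F x) (TF x t - F x) = (\<Sum>j\<le>m. (1 / fact j) *\<^sub>R (\<Sum>\<iota>\<in>P j. A j \<iota>))"
    unfolding Pp_def
  proof (rule sum.cong[OF refl])
    fix j assume "j \<in> {..m}"
    then have j: "j \<le> m" by simp
    have ml: "mlin j (a j (F x))" by (rule msym_mlin[OF sa[OF Fx j]])
    have "a j (F x) (\<lambda>_. TF x t - F x) = a j (F x) (\<lambda>l. if l<j then (\<Sum>s\<in>{1..m}. q s) else 0)"
      unfolding TFs by (rule mlin_cong[OF ml]) simp
    also have "\<dots> = (\<Sum>\<iota>\<in>{..<j} \<rightarrow>\<^sub>E {1..m}. a j (F x) (\<lambda>l. if l<j then q (\<iota> l) else 0))"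
      by (rule mlin_expand[OF ml order_refl]) simp
    also have "\<dots> = (\<Sum>\<iota>\<in>P j. A j \<iota>)"
      unfolding P_def A_def by (intro sum.cong refl mlin_cong[OF ml]) simp
    finally show "(1 / fact j) *\<^sub>R a j (F x) (\<lambda>_. TF x t - F x) = (1 / fact j) *\<^sub>R (\<Sum>\<iota>\<in>P j. A j \<iota>)" by simp
  qed
  have T1: "Th x t = (\<Sum>j\<le>m. (1 / fact j) *\<^sub>R (\<Sum>\<iota>\<in>{\<iota>\<in>P j. off \<iota> j \<le> m}. A j \<iota>))"
  proof -
    have "Th x t = (\<Sum>k\<le>m. \<Sum>j\<le>m. \<Sum>\<iota>\<in>Cset m j k. (1 / fact j) *\<^sub>R A j \<iota>)"
      unfolding Th_def
    proof (rule sum.cong[OF refl])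
      fix k
      have "h k x (\<lambda>_. t) = fact k *\<^sub>R (\<Sum>j\<le>m. \<Sum>\<iota>\<in>Cset m j k. (1 / fact j) *\<^sub>R A j \<iota>)"
        unfolding h_def A_def q_def by (rule diag_cjet) (intro msym_mlin sa Fx, simp)
      then show "(1 / fact k) *\<^sub>R h k x (\<lambda>_. t) = (\<Sum>j\<le>m. \<Sum>\<iota>\<in>Cset m j k. (1 / fact j) *\<^sub>R A j \<iota>)"
        by simp
    qed
    also have "\<dots> = (\<Sum>j\<le>m. \<Sum>k\<le>m. \<Sum>\<iota>\<in>Cset m j k. (1 / fact j) *\<^sub>R A j \<iota>)" by (rule sum.swap)
    also have "\<dots> = (\<Sum>j\<le>m. (1 / fact j) *\<^sub>R (\<Sum>\<iota>\<in>{\<iota>\<in>P j. off \<iota> j \<le> m}. A j \<iota>))"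
    proof (rule sum.cong[OF refl])
      fix j
      have g: "(\<Sum>k\<in>{..m}. \<Sum>\<iota>\<in>{\<iota>\<in>{\<iota>\<in>P j. off \<iota> j \<le> m}. off \<iota> j = k}. A j \<iota>) = (\<Sum>\<iota>\<in>{\<iota>\<in>P j. off \<iota> j \<le> m}. A j \<iota>)"
        by (rule sum.group) (use finP in auto)
      have c: "{\<iota>\<in>{\<iota>\<in>P j. off \<iota> j \<le> m}. off \<iota> j = k} = Cset m j k" if "k \<in> {..m}" for k
        using that unfolding Cset_def P_def by blast
      show "(\<Sum>k\<le>m. \<Sum>\<iota>\<in>Cset m j k. (1 / fact j) *\<^sub>R A j \<iota>) = (1 / fact j) *\<^sub>R (\<Sum>\<iota>\<in>{\<iota>\<in>P j. off \<iota> j \<le> m}. A j \<iota>)"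
        unfolding g[symmetric] scaleR_sum_right using c by (intro sum.cong refl) auto
    qed
    finally show ?thesis .
  qed
  have split: "(\<Sum>\<iota>\<in>P j. A j \<iota>) - (\<Sum>\<iota>\<in>{\<iota>\<in>P j. off \<iota> j \<le> m}. A j \<iota>) = (\<Sum>\<iota>\<in>{\<iota>\<in>P j. \<not> off \<iota> j \<le> m}. A j \<iota>)" for j
  proof -
    have "(\<Sum>\<iota>\<in>P j. A j \<iota>) = (\<Sum>\<iota>\<in>P j. (if off \<iota> j \<le> m then A j \<iota> else 0) + (if \<not> off \<iota> j \<le> m then A j \<iota> else 0))"
      by (intro sum.cong refl) simp
    also have "\<dots> = (\<Sum>\<iota>\<in>{\<iota>\<in>P j. off \<iota> j \<le> m}. A j \<iota>) + (\<Sum>\<iota>\<in>{\<iota>\<in>P j. \<not> off \<iota> j \<le> m}. A j \<iota>)"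
      unfolding sum.distrib sum.inter_filter[OF finP] ..
    finally show ?thesis by simp
  qed
  have diff: "Pp (F x) (TF x t - F x) - Th x t = (\<Sum>j\<le>m. (1 / fact j) *\<^sub>R (\<Sum>\<iota>\<in>{\<iota>\<in>P j. \<not> off \<iota> j \<le> m}. A j \<iota>))"
    unfolding P1 T1 sum_subtractf[symmetric] scaleR_diff_right[symmetric] split ..
  have bq: "norm (q i) \<le> Mb * norm t ^ i" if "i \<le> m" for i
  proof -
    have "norm (q i) = (1 / fact i) * norm (b i x (\<lambda>_. t))" unfolding q_def by simp
    also have "\<dots> \<le> 1 * norm (b i x (\<lambda>_. t))" by (intro mult_right_mono) (auto simp: divide_le_eq_1)
    also have "\<dots> \<le> Mb * norm t ^ i" using bb[OF x that, of "\<lambda>_. t"] by simp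
    finally show ?thesis .
  qed
  have bA: "norm (A j \<iota>) \<le> Ma * Mb^j * norm t ^ Suc m" if j: "j \<le> m" and i: "\<iota> \<in> {\<iota>\<in>P j. \<not> off \<iota> j \<le> m}" for j \<iota>
  proof -
    have ir: "\<iota> l \<in> {1..m}" if "l < j" for l using i that unfolding P_def by (auto simp: PiE_iff)
    have "norm (A j \<iota>) \<le> Ma * (\<Prod>l<j. norm (q (\<iota> l)))" unfolding A_def by (rule ba[OF Fx j])
    also have "\<dots> \<le> Ma * (\<Prod>l<j. Mb * norm t ^ (\<iota> l))"
      by (intro mult_left_mono[OF _ Ma0] prod_mono) (use ir bq in auto)
    also have "\<dots> = Ma * Mb^j * norm t ^ (off \<iota> j)"
      by (simp add: prod.distrib power_sum off_def)
    also have "\<dots> \<le> Ma * Mb^j * norm t ^ Suc m"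
      using i t Ma0 Mb0 by (intro mult_left_mono power_decreasing) auto
    finally show ?thesis .
  qed
  have "norm (Pp (F x) (TF x t - F x) - Th x t) \<le> (\<Sum>j\<le>m. norm ((1 / fact j) *\<^sub>R (\<Sum>\<iota>\<in>{\<iota>\<in>P j. \<not> off \<iota> j \<le> m}. A j \<iota>)))"
    unfolding diff by (rule norm_sum)
  also have "\<dots> \<le> (\<Sum>j\<le>m. real (card (P j)) * (Ma * Mb^j) * norm t ^ Suc m)"
  proof (rule sum_mono)
    fix j assume "j \<in> {..m}"
    then have j: "j \<le> m" by simp
    have "norm ((1 / fact j) *\<^sub>R (\<Sum>\<iota>\<in>{\<iota>\<in>P j. \<not> off \<iota> j \<le> m}. A j \<iota>)) \<le> norm (\<Sum>\<iota>\<in>{\<iota>\<in>P j. \<not> off \<iota> j \<le> m}. A j \<iota>)"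
      by (rule norm_inv_fact_le)
    also have "\<dots> \<le> (\<Sum>\<iota>\<in>{\<iota>\<in>P j. \<not> off \<iota> j \<le> m}. Ma * Mb^j * norm t ^ Suc m)"
      by (rule order_trans[OF norm_sum sum_mono]) (rule bA[OF j])
    also have "\<dots> = real (card {\<iota>\<in>P j. \<not> off \<iota> j \<le> m}) * (Ma * Mb^j * norm t ^ Suc m)" by simp
    also have "\<dots> \<le> real (card (P j)) * (Ma * Mb^j * norm t ^ Suc m)"
      using Ma0 Mb0 by (intro mult_right_mono) (auto intro!: card_mono finP)
    finally show "norm ((1 / fact j) *\<^sub>R (\<Sum>\<iota>\<in>{\<iota>\<in>P j. \<not> off \<iota> j \<le> m}. A j \<iota>)) \<le> real (card (P j)) * (Ma * Mb^j) * norm t ^ Suc m"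
      by (simp add: mult_ac)
  qed
  also have "\<dots> = Ctail * norm t ^ Suc m" unfolding Ctail_def P_def by (simp add: sum_distrib_right)
  finally show ?thesis .
qed

end


context compo begin

definition L where "L = real (Suc m) * Mb + 1"

lemma L_pos: "L > 0" unfolding L_def using Mb0 by (simp add: add_nonneg_pos)

lemma L_ge: "real (Suc m) * Mb \<le> L" unfolding L_def by simp

lemma TF_split: "x \<in> U \<Longrightarrow> TF x t - F x = (\<Sum>i\<in>{1..m}. (1 / fact i) *\<^sub>R b i x (\<lambda>_. t))"
proof -
  assume x: "x \<in> U"
  have "TF x t = (\<Sum>i\<in>{0..m}. (1 / fact i) *\<^sub>R b i x (\<lambda>_. t))" unfolding TF_def by (simp add: atMost_atLeast0)
  also have "\<dots> = (1 / fact 0) *\<^sub>R b 0 x (\<lambda>_. t) + (\<Sum>i\<in>{Suc 0..m}. (1 / fact i) *\<^sub>R b i x (\<lambda>_. t))"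
    by (rule sum.atLeast_Suc_atMost) simp
  finally show ?thesis using Fb[OF x] by simp
qed

lemma pow_le_self: "0 \<le> (r::real) \<Longrightarrow> r \<le> 1 \<Longrightarrow> 1 \<le> j \<Longrightarrow> r ^ j \<le> r"
  using power_decreasing[of 1 j r] by simp

lemma Q_bound:
  assumes x: "x \<in> U" and t: "norm t \<le> 1"
  shows "norm (TF x t - F x) \<le> L * norm t"
proof -
  have "norm (TF x t - F x) \<le> (\<Sum>i\<in>{1..m}. norm ((1 / fact i) *\<^sub>R b i x (\<lambda>_. t)))"
    unfolding TF_split[OF x] by (rule norm_sum)
  also have "\<dots> \<le> (\<Sum>i\<in>{1..m}. Mb * norm t)"
  proof (rule sum_mono)
    fix i assume i: "i \<in> {1..m}"
    have "norm ((1 / fact i) *\<^sub>R b i x (\<lambda>_. t)) \<le> norm (b i x (\<lambda>_. t))" by (rule norm_inv_fact_le)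
    also have "\<dots> \<le> Mb * norm t ^ i" using bb[OF x, of i "\<lambda>_. t"] i by simp
    also have "\<dots> \<le> Mb * norm t" using i t by (intro mult_left_mono[OF pow_le_self Mb0]) auto
    finally show "norm ((1 / fact i) *\<^sub>R b i x (\<lambda>_. t)) \<le> Mb * norm t" .
  qed
  also have "\<dots> = real m * Mb * norm t" by simp
  also have "\<dots> \<le> L * norm t"
  proof (rule mult_right_mono)
    show "real m * Mb \<le> L" using L_ge Mb0 by (simp add: algebra_simps)
  qed simp
  finally show ?thesis .
qed

lemma F_lip:
  assumes x: "x \<in> U" and y: "y \<in> U" and d1: "norm (x - y) \<le> 1"
  shows "norm (F x - F y) \<le> L * norm (x - y)"
proof -
  define d where "d = x - y"
  have r0: "lip_rem m b 0 x y (\<lambda>_. 0) = F x - (\<Sum>j=0..m. (1 / fact j) *\<^sub>R b j y (\<lambda>_. d))"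
    unfolding lip_rem_def d_def using Fb[OF x] by simp
  have s: "(\<Sum>j=0..m. (1 / fact j) *\<^sub>R b j y (\<lambda>_. d)) = F y + (\<Sum>j\<in>{1..m}. (1 / fact j) *\<^sub>R b j y (\<lambda>_. d))"
    using sum.atLeast_Suc_atMost[of 0 m "\<lambda>j. (1 / fact j) *\<^sub>R b j y (\<lambda>_. d)"] Fb[OF y] by simp
  have e: "F x - F y = lip_rem m b 0 x y (\<lambda>_. 0) + (\<Sum>j\<in>{1..m}. (1 / fact j) *\<^sub>R b j y (\<lambda>_. d))"
    unfolding r0 s by simp
  have nd: "norm d \<le> 1" "norm d \<ge> 0" using d1 by (auto simp: d_def)
  have "norm (lip_rem m b 0 x y (\<lambda>_. 0)) \<le> Mb * norm d powr \<gamma>"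
    using rb[OF x y, of 0 "\<lambda>_. 0"] by (simp add: d_def)
  also have "\<dots> \<le> Mb * norm d"
  proof (rule mult_left_mono[OF _ Mb0])
    have "norm d powr \<gamma> \<le> norm d powr 1" by (rule powr_mono'[OF g1 nd(2) nd(1)])
    then show "norm d powr \<gamma> \<le> norm d" by simp
  qed
  finally have b0: "norm (lip_rem m b 0 x y (\<lambda>_. 0)) \<le> Mb * norm d" .
  have b1: "norm (\<Sum>j\<in>{1..m}. (1 / fact j) *\<^sub>R b j y (\<lambda>_. d)) \<le> real m * (Mb * norm d)"
  proof -
    have "norm (\<Sum>j\<in>{1..m}. (1 / fact j) *\<^sub>R b j y (\<lambda>_. d)) \<le> (\<Sum>j\<in>{1..m}. Mb * norm d)"
    proof (rule order_trans[OF norm_sum sum_mono])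
      fix j assume j: "j \<in> {1..m}"
      have "norm ((1 / fact j) *\<^sub>R b j y (\<lambda>_. d)) \<le> norm (b j y (\<lambda>_. d))" by (rule norm_inv_fact_le)
      also have "\<dots> \<le> Mb * norm d ^ j" using bb[OF y, of j "\<lambda>_. d"] j by simp
      also have "\<dots> \<le> Mb * norm d" using j nd by (intro mult_left_mono[OF pow_le_self Mb0]) auto
      finally show "norm ((1 / fact j) *\<^sub>R b j y (\<lambda>_. d)) \<le> Mb * norm d" .
    qed
    then show ?thesis by simp
  qed
  have "norm (F x - F y) \<le> Mb * norm d + real m * (Mb * norm d)"
  proof -
    have "norm (F x - F y) \<le> norm (lip_rem m b 0 x y (\<lambda>_. 0)) + norm (\<Sum>j\<in>{1..m}. (1 / fact j) *\<^sub>R b j y (\<lambda>_. d))"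
      unfolding e by (rule norm_triangle_ineq)
    then show ?thesis using b0 b1 by linarith
  qed
  also have "\<dots> = real (Suc m) * Mb * norm d" by (simp add: algebra_simps)
  also have "\<dots> \<le> L * norm d" using L_ge nd by (intro mult_right_mono) auto
  finally show ?thesis by (simp add: d_def)
qed

lemma E_bound:
  assumes x: "x \<in> U" and y: "y \<in> U" and dpos: "0 < norm (x - y)" and t: "norm t \<le> norm (x - y)"
  shows "norm (\<Sum>k\<le>m. (1 / fact k) *\<^sub>R lip_rem m b k x y (\<lambda>_. t)) \<le> real (Suc m) * Mb * norm (x - y) powr \<gamma>"
proof -
  have "norm (\<Sum>k\<le>m. (1 / fact k) *\<^sub>R lip_rem m b k x y (\<lambda>_. t)) \<le> (\<Sum>k\<le>m. Mb * norm (x - y) powr \<gamma>)"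
  proof (rule order_trans[OF norm_sum sum_mono])
    fix k assume "k \<in> {..m}"
    then have k: "k \<le> m" by simp
    have "norm ((1 / fact k) *\<^sub>R lip_rem m b k x y (\<lambda>_. t)) \<le> norm (lip_rem m b k x y (\<lambda>_. t))" by (rule norm_inv_fact_le)
    also have "\<dots> \<le> Mb * norm (x - y) powr (\<gamma> - real k) * norm t ^ k" using rb[OF x y k, of "\<lambda>_. t"] by simp
    also have "\<dots> \<le> Mb * norm (x - y) powr (\<gamma> - real k) * norm (x - y) ^ k"
      using t Mb0 by (intro mult_left_mono power_mono) auto
    also have "\<dots> = Mb * norm (x - y) powr \<gamma>"
    proof -
      have "norm (x - y) powr (\<gamma> - real k) * norm (x - y) ^ k = norm (x - y) powr (\<gamma> - real k) * norm (x - y) powr real k"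
        using dpos by (simp add: powr_realpow)
      also have "\<dots> = norm (x - y) powr \<gamma>" by (simp add: powr_add[symmetric])
      finally show ?thesis by (simp add: mult.assoc)
    qed
    finally show "norm ((1 / fact k) *\<^sub>R lip_rem m b k x y (\<lambda>_. t)) \<le> Mb * norm (x - y) powr \<gamma>" .
  qed
  also have "\<dots> = real (Suc m) * Mb * norm (x - y) powr \<gamma>" by simp
  finally show ?thesis .
qed

lemma reexp_sub:
  fixes g :: "nat \<Rightarrow> 'x::real_normed_vector \<Rightarrow> (nat \<Rightarrow> 'x) \<Rightarrow> 'y::real_normed_vector"
  assumes sym: "\<And>j. j \<le> m \<Longrightarrow> multilin_sym j (g j y)"
  shows "(\<Sum>j\<le>m. (1 / fact j) *\<^sub>R g j y (\<lambda>_. (x - y) + t)) =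
    (\<Sum>k\<le>m. (1 / fact k) *\<^sub>R g k x (\<lambda>_. t)) - (\<Sum>k\<le>m. (1 / fact k) *\<^sub>R lip_rem m g k x y (\<lambda>_. t))"
proof -
  have "(\<Sum>j\<le>m. (1 / fact j) *\<^sub>R g j y (\<lambda>_. (x - y) + t)) =
    (\<Sum>k\<le>m. (1 / fact k) *\<^sub>R (g k x (\<lambda>_. t) - lip_rem m g k x y (\<lambda>_. t)))" by (rule lip_reexpand) (rule sym)
  also have "\<dots> = (\<Sum>k\<le>m. (1 / fact k) *\<^sub>R g k x (\<lambda>_. t)) - (\<Sum>k\<le>m. (1 / fact k) *\<^sub>R lip_rem m g k x y (\<lambda>_. t))"
    by (simp only: scaleR_diff_right sum_subtractf)
  finally show ?thesis .
qed

lemma TF_re: "x \<in> U \<Longrightarrow> y \<in> U \<Longrightarrow> TF y ((x - y) + t) = TF x t - (\<Sum>k\<le>m. (1 / fact k) *\<^sub>R lip_rem m b k x y (\<lambda>_. t))"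
  unfolding TF_def by (rule reexp_sub) (rule sb)

lemma Pp_re: "u \<in> V \<Longrightarrow> u' \<in> V \<Longrightarrow> Pp u' ((u - u') + z) = Pp u z - (\<Sum>k\<le>m. (1 / fact k) *\<^sub>R lip_rem m a k u u' (\<lambda>_. z))"
  unfolding Pp_def by (rule reexp_sub) (rule sa)

lemma Th_re: "x \<in> U \<Longrightarrow> y \<in> U \<Longrightarrow> Th y ((x - y) + t) = Th x t - (\<Sum>k\<le>m. (1 / fact k) *\<^sub>R lip_rem m h k x y (\<lambda>_. t))"
  unfolding Th_def by (rule reexp_sub) (rule sh)

end


context compo begin

definition Rb where "Rb = 2 * L + real (Suc m) * Mb"
definition Cmain where "Cmain = Ctail + Ctail * 2^(Suc m) + real (Suc m) * Ma * L powr \<gamma>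
   + (\<Sum>j\<le>m. real j * (Ma * Rb^(j-1))) * (real (Suc m) * Mb)"

lemma pow_le_powr: "0 \<le> (r::real) \<Longrightarrow> r \<le> 1 \<Longrightarrow> r ^ Suc m \<le> r powr \<gamma>"
proof -
  assume r: "0 \<le> r" "r \<le> 1"
  show ?thesis
  proof (cases "r = 0")
    case True then show ?thesis by simp
  next
    case False
    then have "r ^ Suc m = r powr real (Suc m)" by (intro powr_realpow[symmetric]) (use r in auto)
    also have "\<dots> \<le> r powr \<gamma>" using m_ge r by (intro powr_mono') auto
    finally show ?thesis .
  qed
qed

lemma core_bound:
  assumes x: "x \<in> U" and y: "y \<in> U" and dpos: "0 < norm (x - y)" and dh: "norm (x - y) \<le> 1/2"
    and t: "norm t \<le> norm (x - y)"
  shows "norm (Th x t - Th y ((x - y) + t)) \<le> Cmain * norm (x - y) powr \<gamma>"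
proof -
  define d where "d = x - y"
  define dn where "dn = norm d"
  have dn0: "0 < dn" and dn1: "dn \<le> 1" and dnh: "dn \<le> 1/2" using dpos dh by (auto simp: dn_def d_def)
  have nt: "norm t \<le> dn" "norm t \<le> 1" using t dn1 by (auto simp: dn_def d_def)
  have ndt: "norm (d + t) \<le> 2 * dn" using norm_triangle_ineq[of d t] nt by (simp add: dn_def)
  have ndt1: "norm (d + t) \<le> 1" using ndt dnh by simp
  have dpg: "dn powr \<gamma> \<le> 1" using dn0 dn1 g1 by (intro powr_le1) auto
  define Q where "Q = TF x t - F x"
  define \<delta> where "\<delta> = F x - F y"
  define E where "E = (\<Sum>k\<le>m. (1 / fact k) *\<^sub>R lip_rem m b k x y (\<lambda>_. t))"
  have Fx: "F x \<in> V" and Fy: "F y \<in> V" using FUV x y by auto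
  have QY: "TF y (d + t) - F y = \<delta> + Q - E" unfolding Q_def \<delta>_def E_def d_def TF_re[OF x y] by simp
  have nQ: "norm Q \<le> L * dn" using Q_bound[OF x nt(2)] nt(1) L_pos unfolding Q_def
    by (meson mult_left_mono less_imp_le order_trans)
  have nd: "norm \<delta> \<le> L * dn" using F_lip[OF x y] dn1 unfolding \<delta>_def dn_def d_def by simp
  have nE: "norm E \<le> real (Suc m) * Mb * dn powr \<gamma>" unfolding E_def dn_def d_def by (rule E_bound[OF x y dpos t])
  have eq: "Th x t - Th y (d + t) = (Th x t - Pp (F x) Q) + (Pp (F x) Q - Pp (F y) (\<delta> + Q))
      + (Pp (F y) (\<delta> + Q) - Pp (F y) (\<delta> + Q - E)) + (Pp (F y) (TF y (d + t) - F y) - Th y (d + t))"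
    unfolding QY by simp
  have e1: "norm (Th x t - Pp (F x) Q) \<le> Ctail * dn powr \<gamma>"
  proof -
    have "norm (Th x t - Pp (F x) Q) = norm (Pp (F x) (TF x t - F x) - Th x t)" unfolding Q_def by (simp add: norm_minus_commute)
    also have "\<dots> \<le> Ctail * norm t ^ Suc m" by (rule faa[OF x nt(2)])
    also have "\<dots> \<le> Ctail * dn ^ Suc m" using nt by (intro mult_left_mono[OF power_mono Ctail_nonneg]) auto
    also have "\<dots> \<le> Ctail * dn powr \<gamma>" using dn0 dn1 by (intro mult_left_mono[OF pow_le_powr Ctail_nonneg]) auto
    finally show ?thesis .
  qed
  have e4: "norm (Pp (F y) (TF y (d + t) - F y) - Th y (d + t)) \<le> Ctail * 2^(Suc m) * dn powr \<gamma>"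
  proof -
    have "norm (Pp (F y) (TF y (d + t) - F y) - Th y (d + t)) \<le> Ctail * norm (d + t) ^ Suc m" by (rule faa[OF y ndt1])
    also have "\<dots> \<le> Ctail * (2 * dn) ^ Suc m" using ndt by (intro mult_left_mono[OF power_mono Ctail_nonneg]) auto
    also have "\<dots> = Ctail * 2^(Suc m) * dn ^ Suc m" by (simp add: power_mult_distrib)
    also have "\<dots> \<le> Ctail * 2^(Suc m) * dn powr \<gamma>" using dn0 dn1 Ctail_nonneg
      by (intro mult_left_mono[OF pow_le_powr]) auto
    finally show ?thesis .
  qed
  have e2: "norm (Pp (F x) Q - Pp (F y) (\<delta> + Q)) \<le> real (Suc m) * Ma * L powr \<gamma> * dn powr \<gamma>"
  proof -
    have "Pp (F y) (\<delta> + Q) = Pp (F x) Q - (\<Sum>k\<le>m. (1 / fact k) *\<^sub>R lip_rem m a k (F x) (F y) (\<lambda>_. Q))"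
      unfolding \<delta>_def by (rule Pp_re[OF Fx Fy])
    then have "Pp (F x) Q - Pp (F y) (\<delta> + Q) = (\<Sum>k\<le>m. (1 / fact k) *\<^sub>R lip_rem m a k (F x) (F y) (\<lambda>_. Q))" by simp
    moreover have "norm (\<Sum>k\<le>m. (1 / fact k) *\<^sub>R lip_rem m a k (F x) (F y) (\<lambda>_. Q)) \<le> (\<Sum>k\<le>m. Ma * (L * dn) powr \<gamma>)"
    proof (rule order_trans[OF norm_sum sum_mono])
      fix k assume "k \<in> {..m}"
      then have k: "k \<le> m" by simp
      have gk: "\<gamma> - real k \<ge> 0" using m_lt k by simp
      have Ld: "L * dn > 0" using L_pos dn0 by simp
      have "norm ((1 / fact k) *\<^sub>R lip_rem m a k (F x) (F y) (\<lambda>_. Q)) \<le> norm (lip_rem m a k (F x) (F y) (\<lambda>_. Q))"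
        by (rule norm_inv_fact_le)
      also have "\<dots> \<le> Ma * norm \<delta> powr (\<gamma> - real k) * norm Q ^ k"
        using ra[OF Fx Fy k, of "\<lambda>_. Q"] by (simp add: \<delta>_def)
      also have "\<dots> \<le> Ma * (L * dn) powr (\<gamma> - real k) * (L * dn) ^ k"
        using nd nQ gk Ma0 by (intro mult_mono mult_left_mono powr_mono2 power_mono) auto
      also have "\<dots> = Ma * (L * dn) powr \<gamma>"
      proof -
        have "(L * dn) powr (\<gamma> - real k) * (L * dn) ^ k = (L * dn) powr (\<gamma> - real k) * (L * dn) powr real k"
          using Ld by (simp add: powr_realpow)
        also have "\<dots> = (L * dn) powr \<gamma>" by (simp add: powr_add[symmetric])
        finally show ?thesis by (simp add: mult.assoc)
      qed
      finally show "norm ((1 / fact k) *\<^sub>R lip_rem m a k (F x) (F y) (\<lambda>_. Q)) \<le> Ma * (L * dn) powr \<gamma>" .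
    qed
    moreover have "(L * dn) powr \<gamma> = L powr \<gamma> * dn powr \<gamma>"
      using L_pos dn0 by (simp add: powr_mult)
    ultimately show ?thesis by (simp add: mult_ac)
  qed
  have e3: "norm (Pp (F y) (\<delta> + Q) - Pp (F y) (\<delta> + Q - E)) \<le> (\<Sum>j\<le>m. real j * (Ma * Rb^(j-1))) * (real (Suc m) * Mb) * dn powr \<gamma>"
  proof -
    have n1: "norm (\<delta> + Q) \<le> Rb"
    proof -
      have "norm (\<delta> + Q) \<le> L * dn + L * dn" using norm_triangle_ineq[of \<delta> Q] nd nQ by linarith
      also have "\<dots> \<le> 2 * L" using L_pos dn1 by (simp add: mult_left_le)
      moreover have "0 \<le> real (Suc m) * Mb" using Mb0 by simp
      ultimately show ?thesis unfolding Rb_def by linarith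
    qed
    have n2: "norm (\<delta> + Q - E) \<le> Rb"
    proof -
      have "norm (\<delta> + Q - E) \<le> norm (\<delta> + Q) + norm E" by (rule norm_triangle_ineq4)
      also have "\<dots> \<le> 2 * L + real (Suc m) * Mb"
      proof (rule add_mono)
        show "norm (\<delta> + Q) \<le> 2 * L"
          using norm_triangle_ineq[of \<delta> Q] nd nQ L_pos dn1 by (smt (verit) mult_left_le)
        show "norm E \<le> real (Suc m) * Mb" using nE dpg Mb0 by (smt (verit) mult_left_le of_nat_0_le_iff mult_nonneg_nonneg)
      qed
      finally show ?thesis unfolding Rb_def .
    qed
    have "Pp (F y) (\<delta> + Q) - Pp (F y) (\<delta> + Q - E) = (\<Sum>j\<le>m. (1 / fact j) *\<^sub>R (a j (F y) (\<lambda>_. \<delta> + Q) - a j (F y) (\<lambda>_. \<delta> + Q - E)))"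
      unfolding Pp_def by (simp add: scaleR_diff_right sum_subtractf)
    also have "norm \<dots> \<le> (\<Sum>j\<le>m. real j * (Ma * Rb^(j-1) * norm E))"
    proof (rule order_trans[OF norm_sum sum_mono])
      fix j assume "j \<in> {..m}"
      then have j: "j \<le> m" by simp
      have "norm ((1 / fact j) *\<^sub>R (a j (F y) (\<lambda>_. \<delta> + Q) - a j (F y) (\<lambda>_. \<delta> + Q - E))) \<le>
          norm (a j (F y) (\<lambda>_. \<delta> + Q) - a j (F y) (\<lambda>_. \<delta> + Q - E))" by (rule norm_inv_fact_le)
      also have "\<dots> \<le> real j * (Ma * Rb^(j-1) * norm ((\<delta> + Q) - (\<delta> + Q - E)))"
        by (rule mlin_diag_lip[OF msym_mlin[OF sa[OF Fy j]] ba[OF Fy j] Ma0 n1 n2])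
      finally show "norm ((1 / fact j) *\<^sub>R (a j (F y) (\<lambda>_. \<delta> + Q) - a j (F y) (\<lambda>_. \<delta> + Q - E))) \<le> real j * (Ma * Rb^(j-1) * norm E)"
        by simp
    qed
    also have "\<dots> = (\<Sum>j\<le>m. real j * (Ma * Rb^(j-1))) * norm E" unfolding sum_distrib_right by (intro sum.cong refl) (simp add: mult_ac)
    also have "\<dots> \<le> (\<Sum>j\<le>m. real j * (Ma * Rb^(j-1))) * (real (Suc m) * Mb * dn powr \<gamma>)"
    proof (rule mult_left_mono[OF nE])
      have "Rb \<ge> 0" unfolding Rb_def using L_pos Mb0 by simp
      then show "0 \<le> (\<Sum>j\<le>m. real j * (Ma * Rb^(j-1)))" using Ma0 by (intro sum_nonneg) simp
    qed
    finally show ?thesis by (simp add: mult_ac)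
  qed
  have "norm (Th x t - Th y (d + t)) \<le> norm (Th x t - Pp (F x) Q) + norm (Pp (F x) Q - Pp (F y) (\<delta> + Q))
      + norm (Pp (F y) (\<delta> + Q) - Pp (F y) (\<delta> + Q - E)) + norm (Pp (F y) (TF y (d + t) - F y) - Th y (d + t))"
    unfolding eq by (intro order_trans[OF norm_triangle_ineq] add_mono order_refl)
  also have "\<dots> \<le> Cmain * dn powr \<gamma>"
    using e1 e2 e3 e4 unfolding Cmain_def by (simp add: algebra_simps)
  finally show ?thesis unfolding dn_def d_def .
qed

end


lemma powr_crude:
  assumes r: "1/2 \<le> (r::real)" and e: "0 \<le> e1" "e1 \<le> e2" "e2 \<le> g" 
  shows "r powr e1 \<le> 2 powr g * r powr e2"
proof (cases "r \<ge> 1")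
  case True
  have "r powr e1 \<le> r powr e2" using True e by (intro powr_mono) auto
  also have "\<dots> \<le> 2 powr g * r powr e2"
  proof -
    have "1 \<le> 2 powr g" using e by (intro ge_one_powr_ge_zero) auto
    then show ?thesis using mult_right_mono[of 1 "2 powr g" "r powr e2"] by simp
  qed
  finally show ?thesis .
next
  case False
  have r0: "0 < r" using r by simp
  have "r powr e1 \<le> 1" using False r0 e by (intro powr_le1) auto
  also have "1 \<le> 2 powr (g - e2)" using e by (intro ge_one_powr_ge_zero) auto
  also have "2 powr (g - e2) = 2 powr g * (1/2) powr e2"
    by (simp add: powr_diff powr_divide divide_simps)
  also have "\<dots> \<le> 2 powr g * r powr e2"
    using r e by (intro mult_left_mono powr_mono2) auto
  finally show ?thesis .
qed

context compo begin

lemma Cjb_nonneg: "Cjb m Ma Mb k \<ge> 0"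
  unfolding Cjb_def using Ma0 Mb0 by (intro sum_nonneg) (auto intro!: mult_nonneg_nonneg divide_nonneg_nonneg prod_nonneg)

lemma Ctail_Cmain_nonneg: "Cmain \<ge> 0"
proof -
  have "Rb \<ge> 0" unfolding Rb_def using L_pos Mb0 by simp
  then show ?thesis unfolding Cmain_def using Ctail_nonneg Ma0 Mb0
    by (intro add_nonneg_nonneg mult_nonneg_nonneg sum_nonneg) auto
qed

lemma hb: "x \<in> U \<Longrightarrow> norm (h k x v) \<le> Cjb m Ma Mb k * (\<Prod>p<k. norm (v p))"
  unfolding h_def by (rule norm_cjet[OF ba bb Ma0 Mb0]) (auto intro: FUV)

lemma mlR: "x \<in> U \<Longrightarrow> y \<in> U \<Longrightarrow> k \<le> m \<Longrightarrow> multilin_sym k (lip_rem m h k x y)"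
  by (rule lip_rem_msym) (auto intro: sh)

lemma rem_diag0:
  assumes x: "x \<in> U" and y: "y \<in> U" and dpos: "0 < norm (x - y)" and dh: "norm (x - y) \<le> 1/2"
    and k: "k \<le> m" and w: "norm w = norm (x - y)"
    and KM: "\<forall>(cc::nat \<Rightarrow> 'w) B. (\<forall>s\<in>{0..1}. norm (\<Sum>k\<le>m. s^k *\<^sub>R cc k) \<le> B) \<longrightarrow> (\<forall>k\<le>m. norm (cc k) \<le> KM * B)"
  shows "norm (lip_rem m h k x y (\<lambda>_. w)) \<le> fact k * (KM * (Cmain * norm (x - y) powr \<gamma>))"
proof -
  define cc where "cc i = (1 / fact i) *\<^sub>R lip_rem m h i x y (\<lambda>_. w)" for i
  have poly: "(\<Sum>i\<le>m. s^i *\<^sub>R cc i) = Th x (s *\<^sub>R w) - Th y ((x - y) + s *\<^sub>R w)" for s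
  proof -
    have "Th x (s *\<^sub>R w) - Th y ((x - y) + s *\<^sub>R w) = (\<Sum>i\<le>m. (1 / fact i) *\<^sub>R lip_rem m h i x y (\<lambda>_. s *\<^sub>R w))"
      unfolding Th_re[OF x y] by simp
    also have "\<dots> = (\<Sum>i\<le>m. s^i *\<^sub>R cc i)"
    proof (rule sum.cong[OF refl])
      fix i assume "i \<in> {..m}"
      then have i: "i \<le> m" by simp
      have "lip_rem m h i x y (\<lambda>l. s *\<^sub>R (\<lambda>_. w) l) = s^i *\<^sub>R lip_rem m h i x y (\<lambda>_. w)"
        by (rule mlin_scale_const[OF msym_mlin[OF mlR[OF x y i]]])
      then show "(1 / fact i) *\<^sub>R lip_rem m h i x y (\<lambda>_. s *\<^sub>R w) = s^i *\<^sub>R cc i"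
        unfolding cc_def by simp
    qed
    finally show ?thesis by simp
  qed
  have bnd: "\<forall>s\<in>{0..1}. norm (\<Sum>i\<le>m. s^i *\<^sub>R cc i) \<le> Cmain * norm (x - y) powr \<gamma>"
  proof
    fix s :: real assume s: "s \<in> {0..1}"
    have "norm (s *\<^sub>R w) \<le> norm (x - y)" using s w by (simp add: mult_left_le_one_le)
    then show "norm (\<Sum>i\<le>m. s^i *\<^sub>R cc i) \<le> Cmain * norm (x - y) powr \<gamma>"
      unfolding poly by (rule core_bound[OF x y dpos dh])
  qed
  have "norm (cc k) \<le> KM * (Cmain * norm (x - y) powr \<gamma>)" using KM bnd k by blast
  moreover have "lip_rem m h k x y (\<lambda>_. w) = fact k *\<^sub>R cc k" unfolding cc_def by simp
  ultimately show ?thesis by simp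
qed

lemma rem_diag:
  assumes x: "x \<in> U" and y: "y \<in> U" and dpos: "0 < norm (x - y)" and dh: "norm (x - y) \<le> 1/2"
    and k: "k \<le> m" and KM0: "KM \<ge> 0"
    and KM: "\<forall>(cc::nat \<Rightarrow> 'w) B. (\<forall>s\<in>{0..1}. norm (\<Sum>k\<le>m. s^k *\<^sub>R cc k) \<le> B) \<longrightarrow> (\<forall>k\<le>m. norm (cc k) \<le> KM * B)"
  shows "norm (lip_rem m h k x y (\<lambda>_. w)) \<le> (fact k * KM * Cmain * norm (x - y) powr (\<gamma> - real k)) * norm w ^ k"
proof -
  define dn where "dn = norm (x - y)"
  have dn0: "dn > 0" using dpos by (simp add: dn_def)
  have ml: "mlin k (lip_rem m h k x y)" by (rule msym_mlin[OF mlR[OF x y k]])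
  have C0: "0 \<le> fact k * KM * Cmain * dn powr (\<gamma> - real k)"
    using KM0 Ctail_Cmain_nonneg by simp
  show ?thesis
  proof (cases "w = 0")
    case True
    show ?thesis
    proof (cases "k = 0")
      case k0: True
      have "lip_rem m h k x y (\<lambda>_. w) = lip_rem m h k x y (\<lambda>_. x - y)" by (rule mlin_cong[OF ml]) (simp add: k0)
      also have "norm \<dots> \<le> fact k * (KM * (Cmain * norm (x - y) powr \<gamma>))" by (rule rem_diag0[OF x y dpos dh k refl KM])
      finally show ?thesis using k0 by (simp add: mult_ac)
    next
      case False
      have "lip_rem m h k x y (\<lambda>_. w) = 0" using True False by (intro mlin_zero[OF ml, of 0]) auto
      then show ?thesis using C0 by (simp add: dn_def)
    qed
  next
    case False
    define w' where "w' = (dn / norm w) *\<^sub>R w"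
    have nw': "norm w' = norm (x - y)" using False dn0 by (simp add: w'_def dn_def)
    have ww: "w = (norm w / dn) *\<^sub>R w'" using False dn0 by (simp add: w'_def)
    have "lip_rem m h k x y (\<lambda>_. w) = lip_rem m h k x y (\<lambda>l. (norm w / dn) *\<^sub>R (\<lambda>_. w') l)"
      by (subst ww) simp
    also have "\<dots> = (norm w / dn)^k *\<^sub>R lip_rem m h k x y (\<lambda>_. w')" by (rule mlin_scale_const[OF ml])
    finally have e: "norm (lip_rem m h k x y (\<lambda>_. w)) = (norm w / dn)^k * norm (lip_rem m h k x y (\<lambda>_. w'))"
      using dn0 by simp
    have "norm (lip_rem m h k x y (\<lambda>_. w')) \<le> fact k * (KM * (Cmain * dn powr \<gamma>))"
      using rem_diag0[OF x y dpos dh k nw' KM] by (simp add: dn_def)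
    then have "norm (lip_rem m h k x y (\<lambda>_. w)) \<le> (norm w / dn)^k * (fact k * (KM * (Cmain * dn powr \<gamma>)))"
      unfolding e using dn0 by (intro mult_left_mono) auto
    also have "\<dots> = (fact k * KM * Cmain * dn powr (\<gamma> - real k)) * norm w ^ k"
    proof -
      have p: "dn powr \<gamma> / dn ^ k = dn powr (\<gamma> - real k)" using dn0 by (simp add: powr_diff powr_realpow)
      have e1: "(norm w / dn)^k * (fact k * (KM * (Cmain * dn powr \<gamma>))) = (fact k * KM * Cmain * (dn powr \<gamma> / dn ^ k)) * norm w ^ k"
        using dn0 by (simp add: power_divide)
      show ?thesis unfolding e1 p ..
    qed
    finally show ?thesis by (simp add: dn_def)
  qed
qed

end


context compo begin

lemma rem_crude:
  assumes x: "x \<in> U" and y: "y \<in> U" and dbig: "1/2 \<le> norm (x - y)" and k: "k \<le> m"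
  shows "norm (lip_rem m h k x y v) \<le> ((Cjb m Ma Mb k + (\<Sum>j\<le>m. Cjb m Ma Mb j)) * 2 powr \<gamma>) * norm (x - y) powr (\<gamma> - real k) * (\<Prod>i<k. norm (v i))"
proof -
  define dn where "dn = norm (x - y)"
  define P where "P = (\<Prod>i<k. norm (v i))"
  define G where "G = 2 powr \<gamma> * dn powr (\<gamma> - real k)"
  have dn0: "dn > 0" using dbig unfolding dn_def by linarith
  have P0: "P \<ge> 0" unfolding P_def by (intro prod_nonneg) auto
  have G1: "1 \<le> G"
  proof -
    have "dn powr 0 \<le> G" unfolding G_def using dbig m_lt k by (intro powr_crude) (auto simp: dn_def)
    then show ?thesis using dn0 by simp
  qed
  have b1: "norm (h k x v) \<le> Cjb m Ma Mb k * P * G"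
  proof -
    have "norm (h k x v) \<le> Cjb m Ma Mb k * P" unfolding P_def by (rule hb[OF x])
    also have "\<dots> \<le> Cjb m Ma Mb k * P * G"
    proof -
      have cp0: "0 \<le> Cjb m Ma Mb k * P" using Cjb_nonneg P0 by simp
      show ?thesis using mult_left_mono[OF G1 cp0] by simp
    qed
    finally show ?thesis .
  qed
  have b2: "norm ((1 / fact (j - k)) *\<^sub>R h j y (\<lambda>i. if i < k then v i else x - y)) \<le> Cjb m Ma Mb j * P * G"
    if j: "j \<in> {k..m}" for j
  proof -
    have kj: "k \<le> j" "j \<le> m" using j by auto
    have "norm ((1 / fact (j - k)) *\<^sub>R h j y (\<lambda>i. if i < k then v i else x - y)) \<le> norm (h j y (\<lambda>i. if i < k then v i else x - y))"
      by (rule norm_inv_fact_le)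
    also have "\<dots> \<le> Cjb m Ma Mb j * (\<Prod>p<j. norm (if p < k then v p else x - y))" using hb[OF y] by simp
    also have "(\<Prod>p<j. norm (if p < k then v p else x - y)) = P * dn ^ (j - k)"
    proof -
      have "(\<Prod>p<j. norm (if p < k then v p else x - y)) = (\<Prod>p<k + (j - k). norm (if p < k then v p else x - y))"
        using kj by simp
      also have "\<dots> = P * dn ^ (j - k)" unfolding prod_lessThan_add P_def dn_def by simp
      finally show ?thesis .
    qed
    also have "dn ^ (j - k) \<le> G"
    proof -
      have "dn ^ (j - k) = dn powr real (j - k)" using dn0 by (simp add: powr_realpow)
      also have "\<dots> \<le> G" unfolding G_def using dbig m_lt kj by (intro powr_crude) (auto simp: dn_def)
      finally show ?thesis .
    qed
    then have "Cjb m Ma Mb j * (P * dn ^ (j - k)) \<le> Cjb m Ma Mb j * P * G"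
      using Cjb_nonneg P0 by (simp add: mult.assoc mult_left_mono)
    finally show ?thesis by simp
  qed
  have "norm (lip_rem m h k x y v) \<le> norm (h k x v) + norm (\<Sum>j=k..m. (1 / fact (j - k)) *\<^sub>R h j y (\<lambda>i. if i < k then v i else x - y))"
    unfolding lip_rem_def by (rule norm_triangle_ineq4)
  also have "\<dots> \<le> Cjb m Ma Mb k * P * G + (\<Sum>j=k..m. Cjb m Ma Mb j * P * G)"
    by (intro add_mono b1 order_trans[OF norm_sum sum_mono] b2)
  also have "Cjb m Ma Mb k * P * G + (\<Sum>j=k..m. Cjb m Ma Mb j * P * G) \<le> Cjb m Ma Mb k * P * G + (\<Sum>j\<le>m. Cjb m Ma Mb j * P * G)"
    using Cjb_nonneg P0 G1 by (intro add_left_mono sum_mono2) auto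
  also have "Cjb m Ma Mb k * P * G + (\<Sum>j\<le>m. Cjb m Ma Mb j * P * G) = ((Cjb m Ma Mb k + (\<Sum>j\<le>m. Cjb m Ma Mb j)) * 2 powr \<gamma>) * dn powr (\<gamma> - real k) * P"
  proof -
    have "(\<Sum>j\<le>m. Cjb m Ma Mb j * P * G) = (\<Sum>j\<le>m. Cjb m Ma Mb j) * (P * G)"
      by (simp add: sum_distrib_right mult.assoc)
    then show ?thesis unfolding G_def by (simp add: algebra_simps)
  qed
  finally show ?thesis unfolding dn_def P_def .
qed

lemma bound_upto:
  assumes "norm r \<le> B * X" "0 \<le> B" "B \<le> C" "0 \<le> X"
  shows "norm r \<le> C * X"
  using assms by (meson mult_right_mono order_trans)

theorem compo_lip: "\<exists>C. lip_coll \<gamma> C U h"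
proof -
  obtain KM where KM0: "KM \<ge> 0" and KM: "\<forall>(cc::nat \<Rightarrow> 'w) B. (\<forall>s\<in>{0..1}. norm (\<Sum>k\<le>m. s^k *\<^sub>R cc k) \<le> B) \<longrightarrow> (\<forall>k\<le>m. norm (cc k) \<le> KM * B)"
    using markov[of m, where 'w='w] by blast
  define Kp where "Kp k = (SOME K. K \<ge> 0 \<and> (\<forall>(A::(nat\<Rightarrow>'d)\<Rightarrow>'w) c v. multilin_sym k A \<longrightarrow> c \<ge> 0 \<longrightarrow>
     (\<forall>w. norm (A (\<lambda>_. w)) \<le> c * norm w ^ k) \<longrightarrow> norm (A v) \<le> K * c * (\<Prod>i<k. norm (v i))))" for k
  have Kp: "Kp k \<ge> 0 \<and> (\<forall>(A::(nat\<Rightarrow>'d)\<Rightarrow>'w) c v. multilin_sym k A \<longrightarrow> c \<ge> 0 \<longrightarrow>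
     (\<forall>w. norm (A (\<lambda>_. w)) \<le> c * norm w ^ k) \<longrightarrow> norm (A v) \<le> Kp k * c * (\<Prod>i<k. norm (v i)))" for k
    unfolding Kp_def by (rule someI_ex[OF polarization[of k, where 'e='d and 'w='w]])
  define Bk where "Bk k = Cjb m Ma Mb k + (Cjb m Ma Mb k + (\<Sum>j\<le>m. Cjb m Ma Mb j)) * 2 powr \<gamma> + Kp k * (fact k * KM * Cmain)" for k
  have Bk0: "0 \<le> Cjb m Ma Mb k" "0 \<le> (Cjb m Ma Mb k + (\<Sum>j\<le>m. Cjb m Ma Mb j)) * 2 powr \<gamma>" "0 \<le> Kp k * (fact k * KM * Cmain)" for k
    using Cjb_nonneg Kp KM0 Ctail_Cmain_nonneg by (auto intro!: add_nonneg_nonneg sum_nonneg mult_nonneg_nonneg)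
  define C where "C = (\<Sum>k\<le>m. Bk k)"
  have BC: "Bk k \<le> C" if "k \<le> m" for k
    unfolding C_def using that Bk0 unfolding Bk_def by (intro member_le_sum) (auto intro!: add_nonneg_nonneg)
  have C0: "C \<ge> 0" unfolding C_def Bk_def using Bk0 by (intro sum_nonneg add_nonneg_nonneg) auto
  show ?thesis
  proof (rule exI[of _ C], unfold lip_coll_def, intro allI impI conjI ballI)
    fix k x and v :: "nat \<Rightarrow> 'd" assume k: "k \<le> m" and x: "x \<in> U"
    show "multilin_sym k (h k x)" by (rule sh[OF x])
    have "Cjb m Ma Mb k \<le> C" using BC[OF k] Bk0[of k] unfolding Bk_def by linarith
    then show "norm (h k x v) \<le> C * (\<Prod>i<k. norm (v i))"
      by (rule bound_upto[OF hb[OF x] Cjb_nonneg]) (intro prod_nonneg, auto)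
  next
    fix k x y and v :: "nat \<Rightarrow> 'd" assume k: "k \<le> m" and x: "x \<in> U" and y: "y \<in> U"
    define dn where "dn = norm (x - y)"
    have X0: "0 \<le> dn powr (\<gamma> - real k) * (\<Prod>i<k. norm (v i))" by (intro mult_nonneg_nonneg prod_nonneg) auto
    have dnn: "dn \<ge> 0" by (simp add: dn_def)
    consider "dn = 0" | "0 < dn" "dn \<le> 1/2" | "1/2 \<le> dn" using dnn by linarith
    then show "norm (lip_rem m h k x y v) \<le> C * norm (x - y) powr (\<gamma> - real k) * (\<Prod>i<k. norm (v i))"
    proof cases
      case 1
      then have "x = y" by (simp add: dn_def)
      then have "lip_rem m h k x y v = 0" using lip_rem_same[OF k] msym_mlin[OF sh[OF x]] by blast
      moreover have "0 \<le> C * (dn powr (\<gamma> - real k) * (\<Prod>i<k. norm (v i)))" by (rule mult_nonneg_nonneg[OF C0 X0])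
      ultimately show ?thesis by (simp add: dn_def mult.assoc)
    next
      case 2
      define c where "c = fact k * KM * Cmain * dn powr (\<gamma> - real k)"
      have c0: "c \<ge> 0" unfolding c_def using KM0 Ctail_Cmain_nonneg by simp
      have diag: "\<forall>w. norm (lip_rem m h k x y (\<lambda>_. w)) \<le> c * norm w ^ k"
        using rem_diag[OF x y _ _ k KM0 KM] 2 unfolding c_def dn_def by auto
      have "norm (lip_rem m h k x y v) \<le> Kp k * c * (\<Prod>i<k. norm (v i))"
        using Kp[of k] mlR[OF x y k] c0 diag by blast
      also have "\<dots> = Kp k * (fact k * KM * Cmain) * (dn powr (\<gamma> - real k) * (\<Prod>i<k. norm (v i)))"
        unfolding c_def by (simp add: mult_ac)
      finally have r: "norm (lip_rem m h k x y v) \<le> Kp k * (fact k * KM * Cmain) * (dn powr (\<gamma> - real k) * (\<Prod>i<k. norm (v i)))" .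
      have "Kp k * (fact k * KM * Cmain) \<le> C" using BC[OF k] Bk0[of k] unfolding Bk_def by linarith
      then have "norm (lip_rem m h k x y v) \<le> C * (dn powr (\<gamma> - real k) * (\<Prod>i<k. norm (v i)))"
        by (rule bound_upto[OF r Bk0(3)]) (rule X0)
      then show ?thesis by (simp add: dn_def mult.assoc)
    next
      case 3
      have r: "norm (lip_rem m h k x y v) \<le> ((Cjb m Ma Mb k + (\<Sum>j\<le>m. Cjb m Ma Mb j)) * 2 powr \<gamma>) * (dn powr (\<gamma> - real k) * (\<Prod>i<k. norm (v i)))"
        using rem_crude[OF x y _ k, of v] 3 by (simp add: dn_def mult.assoc)
      have "(Cjb m Ma Mb k + (\<Sum>j\<le>m. Cjb m Ma Mb j)) * 2 powr \<gamma> \<le> C" using BC[OF k] Bk0[of k] unfolding Bk_def by linarith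
      then have "norm (lip_rem m h k x y v) \<le> C * (dn powr (\<gamma> - real k) * (\<Prod>i<k. norm (v i)))"
        by (rule bound_upto[OF r Bk0(2)]) (rule X0)
      then show ?thesis by (simp add: dn_def mult.assoc)
    qed
  qed
qed

end


lemma Cset_0: "Cset m j 0 = (if j = 0 then {\<lambda>_. undefined} else {})"
proof (cases "j = 0")
  case True
  then show ?thesis unfolding Cset_def by (auto simp: off_def)
next
  case False
  have "\<iota> \<notin> Cset m j 0" for \<iota>
  proof
    assume i: "\<iota> \<in> Cset m j 0"
    have "\<iota> 0 \<ge> 1" using Cset_range[OF i, of 0] False by auto
    moreover have "\<iota> 0 \<le> off \<iota> j" unfolding off_def using False by (intro member_le_sum) auto
    ultimately show False using Cset_off[OF i] by simp
  qed
  then show ?thesis using False by auto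
qed

lemma cjet_0: "cjet m a b F 0 x v = Aterm a b F 0 (\<lambda>_. undefined) x (v \<circ> id)"
proof -
  have p: "{\<sigma>. \<sigma> permutes {..<(0::nat)}} = {id}" by (auto simp: permutes_empty)
  have "cjet m a b F 0 x v = (\<Sum>j\<le>m. if j = 0 then Aterm a b F 0 (\<lambda>_. undefined) x (v \<circ> id) else 0)"
    unfolding cjet_def Cset_0 p by (intro sum.cong refl) auto
  also have "\<dots> = Aterm a b F 0 (\<lambda>_. undefined) x (v \<circ> id)" by (simp add: sum.delta)
  finally show ?thesis .
qed

theorem mainTheorem7:
  fixes \<gamma> :: real
    and f :: "'e::real_normed_vector \<Rightarrow> 'w::banach"
    and V :: "'e set"
    and F :: "real^'n \<Rightarrow> 'e"
    and \<phi> :: "real^'n \<Rightarrow> real^'n"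
  assumes "\<gamma> \<ge> 1"
    and "\<exists>M. lip_gamma_on \<gamma> M V f"
    and "\<exists>G. homeomorphism UNIV V F G"
    and "\<exists>M. lip_gamma_on \<gamma> M UNIV F"
    and "\<exists>M. lip_gamma_on \<gamma> M UNIV \<phi>"
    and "\<forall>y\<in>ball 0 1. \<phi> y = y"
    and "closure {y. \<phi> y \<noteq> 0} \<subseteq> ball 0 2"
  shows "\<exists>C. \<forall>x\<in>lattice_I.
           lip_gamma_on \<gamma> C (ball 0 1)
             (\<lambda>z. f (the_inv_into (F ` ball x 1) (\<lambda>u. \<phi> (inv F u - x)) z))"
proof -
  obtain Mf a where la: "lip_coll \<gamma> Mf V a" and a0: "\<And>u v. u \<in> V \<Longrightarrow> a 0 u v = f u"
    using assms(2) unfolding lip_gamma_on_def by blast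
  obtain MF b where lb: "lip_coll \<gamma> MF UNIV b" and b0: "\<And>u v. b 0 u v = F u"
    using assms(4) unfolding lip_gamma_on_def by blast
  obtain G where hom: "homeomorphism UNIV V F G" using assms(3) by blast
  have GF: "G (F w) = w" for w using hom unfolding homeomorphism_def by auto
  have FV: "F w \<in> V" for w using hom unfolding homeomorphism_def by auto
  have injF: "inj F" by (metis GF injI)
  have la': "lip_coll \<gamma> (max Mf 0) V a" by (rule lip_coll_mono[OF la]) simp
  have lb': "lip_coll \<gamma> (max MF 0) UNIV b" by (rule lip_coll_mono[OF lb]) simp
  interpret compo \<gamma> a b F UNIV V "max Mf 0" "max MF 0"
    by unfold_locales (use assms(1) la' lb' b0 FV in auto)
  obtain C where lh: "lip_coll \<gamma> C UNIV h" using compo_lip by blast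
  have h0: "h 0 z v = f (F z)" for z v
    unfolding h_def cjet_0 Aterm_def using a0[OF FV] by simp
  show ?thesis
  proof (rule exI[of _ C], intro ballI)
    fix x :: "real^'n" assume "x \<in> lattice_I"
    show "lip_gamma_on \<gamma> C (ball 0 1) (\<lambda>z. f (the_inv_into (F ` ball x 1) (\<lambda>u. \<phi> (inv F u - x)) z))"
      unfolding lip_gamma_on_def
    proof (rule exI[of _ "\<lambda>k z. h k (z + x)"], intro conjI ballI allI)
      show "lip_coll \<gamma> C (ball 0 1) (\<lambda>k z. h k (z + x))" by (rule lip_coll_translate[OF lh])
      fix z :: "real^'n" and v assume z: "z \<in> ball 0 1"
      have ti: "the_inv_into (F ` ball x 1) (\<lambda>u. \<phi> (inv F u - x)) z = F (z + x)"
      proof (rule the_inv_into_f_eq)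
        show "inj_on (\<lambda>u. \<phi> (inv F u - x)) (F ` ball x 1)"
        proof (rule inj_onI)
          fix u1 u2 assume u1: "u1 \<in> F ` ball x 1" and u2: "u2 \<in> F ` ball x 1"
            and e: "\<phi> (inv F u1 - x) = \<phi> (inv F u2 - x)"
          obtain w1 where w1: "w1 \<in> ball x 1" "u1 = F w1" using u1 by blast
          obtain w2 where w2: "w2 \<in> ball x 1" "u2 = F w2" using u2 by blast
          have b1: "w1 - x \<in> ball 0 1" using w1(1) by (simp add: dist_norm norm_minus_commute)
          have b2: "w2 - x \<in> ball 0 1" using w2(1) by (simp add: dist_norm norm_minus_commute)
          have "w1 - x = w2 - x" using e assms(6) b1 b2 w1(2) w2(2) inv_f_f[OF injF] by simp
          then show "u1 = u2" using w1(2) w2(2) by simp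
        qed
        show "\<phi> (inv F (F (z + x)) - x) = z" using assms(6) z inv_f_f[OF injF] by simp
        show "F (z + x) \<in> F ` ball x 1" using z by (auto simp: dist_norm)
      qed
      show "h 0 (z + x) v = f (the_inv_into (F ` ball x 1) (\<lambda>u. \<phi> (inv F u - x)) z)"
        unfolding ti h0 ..
    qed
  qed
qed

end
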